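(* Let $\mathcal U(p)=\int\frac{p(x)^2}{2}dx$. (a) On $\mathbb T^d$: for $p,q\in\mathcal P$, $$\mathrm D_{\mathrm T,\mathcal U}(p\|q)=\frac12\int_{\mathbb T^d}\Big(\Delta\Phi_p(x)+\frac{1}{\det\nabla^2\Phi_p(x)}-1-d\Big)q(x)^2\,dx .$$ (b) On $[0,1]$: for smooth strictly positive probability densities $p,q$ with inverse CDFs $F_p^{-1},F_q^{-1}$, $$\mathrm D_{\mathrm T,\mathcal U}(p\|q)=\frac12\int_0^1\Big(\frac{1}{(F_p^{-1})'(s)}-\frac{1}{(F_q^{-1})'(s)}\Big)^2(F_p^{-1})'(s)\,ds .$$
   Context: On $\mathbb T^d=\mathbb R^d/\mathbb Z^d$: $\mathcal P$ is the set of $C^\infty$ strictly positive probability densities; the optimal map from $q$ to $p$ is assumed to be $\nabla\Phi_p$ with $\Phi_p=\tfrac12|x|^2+\varphi_p$, $\varphi_p\in C^\infty(\mathbb T^d)$, $\nabla^2\Phi_p>0$, $p(\nabla\Phi_p(x))\det\nabla^2\Phi_p(x)=q(x)$. On $[0,1]$: the optimal map is $T=F_p^{-1}\circ F_q$ ($F_p,F_q$ the CDFs). In both settings the transport Bregman divergence of a smooth functional $\mathcal F$ with $L^2$ first variation $\frac{\delta\mathcal F}{\delta q}(q)$ (here equal to $q$) is $\mathrm D_{\mathrm T,\mathcal F}(p\|q)=\mathcal F(p)-\mathcal F(q)-\int\big(\nabla_x\tfrac{\delta\mathcal F}{\delta q}(q)(x),T(x)-x\big)q(x)dx$ with $T=\nabla\Phi_p$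 resp. $T=F_p^{-1}\circ F_q$. *)

theory Defs
  imports "HOL-Analysis.Analysis"
begin

coinductive smooth_Rn :: "('a::euclidean_space \<Rightarrow> real) \<Rightarrow> bool" where
  "(\<forall>x. f differentiable (at x)) \<Longrightarrow>
   (\<forall>v. smooth_Rn (\<lambda>x. frechet_derivative f (at x) v)) \<Longrightarrow> smooth_Rn f"

text \<open>C-infinity on a set S (one-sided derivatives at boundary points of an interval).\<close>
coinductive smooth_on_real :: "real set \<Rightarrow> (real \<Rightarrow> real) \<Rightarrow> bool" for S where
  "(\<forall>x\<in>S. f differentiable (at x within S)) \<Longrightarrow>
   smooth_on_real S (\<lambda>x. vector_derivative f (at x within S)) \<Longrightarrow> smooth_on_real S f"

definition unit_cube :: "(real^'n) set" where
  "unit_cube = cbox 0 One"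

definition Zn_periodic :: "(real^'n \<Rightarrow> 'b) \<Rightarrow> bool" where
  "Zn_periodic f \<longleftrightarrow> (\<forall>x k. (\<forall>i. k $ i \<in> \<int>) \<longrightarrow> f (x + k) = f x)"

text \<open>The set P: smooth strictly positive probability densities on the torus,
  seen as Z^d-periodic functions on R^d, normalised on a fundamental cell.\<close>
definition torus_density :: "(real^'n \<Rightarrow> real) \<Rightarrow> bool" where
  "torus_density p \<longleftrightarrow> smooth_Rn p \<and> Zn_periodic p \<and> (\<forall>x. 0 < p x)
     \<and> integral unit_cube p = 1"

definition grad :: "(real^'n \<Rightarrow> real) \<Rightarrow> real^'n \<Rightarrow> real^'n" where
  "grad f x = (\<chi> i. frechet_derivative f (at x) (axis i 1))"

definition hess :: "(real^'n \<Rightarrow> real) \<Rightarrow> real^'n \<Rightarrow> real^'n^'n" where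
  "hess f x = (\<chi> i j. frechet_derivative (\<lambda>y. grad f y $ i) (at x) (axis j 1))"

definition laplacian :: "(real^'n \<Rightarrow> real) \<Rightarrow> real^'n \<Rightarrow> real" where
  "laplacian f x = (\<Sum>i\<in>UNIV. hess f x $ i $ i)"

definition U_torus :: "(real^'n \<Rightarrow> real) \<Rightarrow> real" where
  "U_torus p = integral unit_cube (\<lambda>x. (p x)^2 / 2)"

text \<open>Transport Bregman divergence on the torus of functional F with first
  variation dF, for the transport map T from q to p.\<close>
definition transport_bregman_torus ::
  "((real^'n \<Rightarrow> real) \<Rightarrow> real) \<Rightarrow> ((real^'n \<Rightarrow> real) \<Rightarrow> real^'n \<Rightarrow> real)
   \<Rightarrow> (real^'n \<Rightarrow> real) \<Rightarrow> (real^'n \<Rightarrow> real) \<Rightarrow> (real^'n \<Rightarrow> real^'n) \<Rightarrow> real" where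
  "transport_bregman_torus F dF p q T =
     F p - F q - integral unit_cube (\<lambda>x. (grad (dF q) x \<bullet> (T x - x)) * q x)"

definition interval_density :: "(real \<Rightarrow> real) \<Rightarrow> bool" where
  "interval_density p \<longleftrightarrow> smooth_on_real {0..1} p \<and> (\<forall>x\<in>{0..1}. 0 < p x)
     \<and> integral {0..1} p = 1"

definition cdf :: "(real \<Rightarrow> real) \<Rightarrow> real \<Rightarrow> real" where
  "cdf p x = integral {0..x} p"

definition inv_cdf :: "(real \<Rightarrow> real) \<Rightarrow> real \<Rightarrow> real" where
  "inv_cdf p = inv_into {0..1} (cdf p)"

definition U_int :: "(real \<Rightarrow> real) \<Rightarrow> real" where
  "U_int p = integral {0..1} (\<lambda>x. (p x)^2 / 2)"

definition transport_bregman_int ::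
  "((real \<Rightarrow> real) \<Rightarrow> real) \<Rightarrow> ((real \<Rightarrow> real) \<Rightarrow> real \<Rightarrow> real)
   \<Rightarrow> (real \<Rightarrow> real) \<Rightarrow> (real \<Rightarrow> real) \<Rightarrow> (real \<Rightarrow> real) \<Rightarrow> real" where
  "transport_bregman_int F dF p q T =
     F p - F q - integral {0..1}
        (\<lambda>x. vector_derivative (dF q) (at x within {0..1}) * (T x - x) * q x)"

end

theory Submission
  imports Defs
begin

definition Zv :: "(real^'n) set" where "Zv = {k. \<forall>i. k$i \<in> \<int>}"

lemma Zv_add: "a \<in> Zv \<Longrightarrow> b \<in> Zv \<Longrightarrow> a + b \<in> Zv"
  and Zv_diff: "a \<in> Zv \<Longrightarrow> b \<in> Zv \<Longrightarrow> a - b \<in> Zv"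
  and Zv_uminus: "a \<in> Zv \<Longrightarrow> - a \<in> Zv"
  by (auto simp: Zv_def)

lemma negligible_hyperplane_cart: "negligible {x::real^'n. x$i = c}"
proof -
  have "negligible {x::real^'n. x \<bullet> axis i 1 = c}"
    by (rule negligible_standard_hyperplane) (simp add: Basis_vec_def, blast)
  then show ?thesis by (simp add: cart_eq_inner_axis)
qed

lemma One_cart: "(One::real^'n) $ i = 1"
  by (metis Cart_1 one_index)

lemma mem_unit_cube: "x \<in> (unit_cube :: (real^'n) set) \<longleftrightarrow> (\<forall>i. 0 \<le> x$i \<and> x$i \<le> 1)"
  unfolding unit_cube_def mem_box_cart One_cart zero_index by simp

lemma compact_unit_cube: "compact (unit_cube :: (real^'n) set)"
  by (simp add: unit_cube_def)

definition flv :: "real^'n \<Rightarrow> real^'n" where "flv x = (\<chi> i. of_int \<lfloor>x$i\<rfloor>)"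

lemma flv_Zv: "flv x \<in> Zv" by (simp add: flv_def Zv_def)

lemma flv_cube: "x - flv x \<in> unit_cube"
  by (auto simp: mem_unit_cube flv_def) (smt (verit) real_of_int_floor_add_one_gt)

lemma flv_bound: "\<bar>flv x $ i\<bar> \<le> norm x + 1"
proof -
  have "\<bar>x$i\<bar> \<le> norm x" by (rule component_le_norm_cart)
  then have a: "-norm x \<le> x$i" "x$i \<le> norm x" by (auto simp: abs_le_iff)
  have b: "of_int \<lfloor>x$i\<rfloor> \<le> x$i" "x$i < of_int \<lfloor>x$i\<rfloor> + 1" by linarith+
  show ?thesis unfolding flv_def vec_lambda_beta abs_le_iff using a b by linarith
qed

lemma neg_cube_overlap:
  assumes "k \<in> Zv" "k \<noteq> 0"
  shows "negligible (unit_cube \<inter> (\<lambda>x. x + k) ` unit_cube :: (real^'n) set)"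
proof -
  obtain i where i: "k$i \<noteq> 0" using assms(2) by (metis vec_eq_iff zero_index)
  obtain m where m: "k$i = of_int m" using assms(1) unfolding Zv_def by (metis Ints_cases mem_Collect_eq)
  have "unit_cube \<inter> (\<lambda>x. x + k) ` unit_cube \<subseteq> {x::real^'n. x$i = 0} \<union> {x. x$i = 1}"
  proof
    fix x assume "x \<in> unit_cube \<inter> (\<lambda>x. x + k) ` unit_cube"
    then obtain y where y: "y \<in> unit_cube" "x = y + k" "x \<in> unit_cube" by auto
    have "0 \<le> y$i" "y$i \<le> 1" "0 \<le> x$i" "x$i \<le> 1" using y by (auto simp: mem_unit_cube)
    moreover have "x$i = y$i + of_int m" using y m by simp
    moreover have "m \<noteq> 0" using i m by auto
    ultimately have "(m = 1 \<and> x$i = 1) \<or> (m = -1 \<and> x$i = 0)"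
    proof -
      assume a: "0 \<le> y$i" "y$i \<le> 1" "0 \<le> x$i" "x$i \<le> 1" "x$i = y$i + of_int m" "m \<noteq> 0"
      then have "of_int m \<le> (1::real)" "of_int m \<ge> (-1::real)" by linarith+
      then have "m \<le> 1" "m \<ge> -1" by linarith+
      then have "m = 1 \<or> m = -1" using a(6) by linarith
      then show ?thesis using a by auto
    qed
    then show "x \<in> {x::real^'n. x$i = 0} \<union> {x. x$i = 1}" by auto
  qed
  moreover have "negligible ({x::real^'n. x$i = 0} \<union> {x. x$i = 1})"
    using negligible_hyperplane_cart by (intro negligible_Un) auto
  ultimately show ?thesis using negligible_subset by blast
qed

lemma finite_Zv_box: "finite {k \<in> Zv. \<forall>i. \<bar>(k::real^'n)$i\<bar> \<le> real N}"
proof -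
  let ?F = "\<lambda>i::'n. {x::real. x \<in> \<int> \<and> \<bar>x\<bar> \<le> real N}"
  have fin: "finite {x::real. x \<in> \<int> \<and> \<bar>x\<bar> \<le> real N}"
  proof -
    have "{x::real. x \<in> \<int> \<and> \<bar>x\<bar> \<le> real N} \<subseteq> of_int ` {-int N..int N}"
    proof
      fix x :: real assume "x \<in> {x::real. x \<in> \<int> \<and> \<bar>x\<bar> \<le> real N}"
      then obtain m where "x = of_int m" "\<bar>of_int m\<bar> \<le> real N" by (auto elim: Ints_cases)
      then show "x \<in> of_int ` {-int N..int N}" by (intro image_eqI[of _ _ m]) auto
    qed
    then show ?thesis by (rule finite_subset) auto
  qed
  have "{k \<in> Zv. \<forall>i. \<bar>(k::real^'n)$i\<bar> \<le> real N} \<subseteq> vec_lambda ` (PiE UNIV ?F)"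
  proof
    fix k :: "real^'n" assume k: "k \<in> {k \<in> Zv. \<forall>i. \<bar>k$i\<bar> \<le> real N}"
    show "k \<in> vec_lambda ` (PiE UNIV ?F)"
      by (rule image_eqI[of _ _ "vec_nth k"]) (use k in \<open>auto simp: Zv_def\<close>)
  qed
  moreover have "finite (PiE UNIV ?F)" by (rule finite_PiE) (use fin in auto)
  ultimately show ?thesis using finite_subset by blast
qed

lemma abs_int_cont:
  fixes f :: "real^'n \<Rightarrow> real"
  assumes "continuous_on UNIV f" "S \<in> sets lebesgue" "bounded S"
  shows "f absolutely_integrable_on S"
proof -
  obtain a where a: "S \<subseteq> cbox (-a) a" using bounded_subset_cbox_symmetric assms(3) by blast
  have "f absolutely_integrable_on cbox (-a) a"
    by (rule absolutely_integrable_continuous) (use assms(1) continuous_on_subset in blast)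
  then show ?thesis using set_integrable_subset[OF _ assms(2) a] by blast
qed

lemma has_integral_cont_compact:
  fixes f :: "real^'n \<Rightarrow> real"
  assumes "continuous_on UNIV f" "compact S"
  shows "(f has_integral integral S f) S"
  using abs_int_cont[OF assms(1) _ compact_imp_bounded[OF assms(2)]] lmeasurable_compact[OF assms(2)]
  by (auto simp: absolutely_integrable_on_def fmeasurableD intro: integrable_integral)

lemma cov_real:
  fixes f :: "real^'m::{finite,wellorder} \<Rightarrow> real"
  assumes S: "S \<in> sets lebesgue" and der: "\<And>x. x \<in> S \<Longrightarrow> (g has_derivative g' x) (at x within S)"
    and inj: "inj_on g S" and fi: "f absolutely_integrable_on (g ` S)"
  shows "integral S (\<lambda>x. \<bar>det (matrix (g' x))\<bar> * f (g x)) = integral (g ` S) f"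
proof -
  define F :: "real^'m::{finite,wellorder} \<Rightarrow> real^1" where "F x = f x *\<^sub>R 1" for x
  have Fi: "F absolutely_integrable_on (g ` S)" unfolding F_def using absolutely_integrable_scaleR_right[OF fi] .
  have "(\<lambda>x. \<bar>det (matrix (g' x))\<bar> *\<^sub>R F (g x)) absolutely_integrable_on S \<and>
     integral S (\<lambda>x. \<bar>det (matrix (g' x))\<bar> *\<^sub>R F (g x)) = integral (g ` S) F"
    using has_absolute_integral_change_of_variables[OF S der inj] Fi by blast
  then have A: "(\<lambda>x. \<bar>det (matrix (g' x))\<bar> *\<^sub>R F (g x)) integrable_on S"
    "integral S (\<lambda>x. \<bar>det (matrix (g' x))\<bar> *\<^sub>R F (g x)) = integral (g ` S) F"
    by (auto simp: absolutely_integrable_on_def)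
  have Fi2: "F integrable_on (g ` S)" using Fi by (auto simp: absolutely_integrable_on_def)
  have "integral S (\<lambda>x. (\<bar>det (matrix (g' x))\<bar> *\<^sub>R F (g x)) $ 1) = integral (g ` S) (\<lambda>x. F x $ 1)"
    using integral_component_eq_cart[OF A(1)] integral_component_eq_cart[OF Fi2] A(2) by simp
  then show ?thesis by (simp add: F_def)
qed

lemma trans_integral:
  fixes f :: "real^'m::{finite,wellorder} \<Rightarrow> real"
  assumes f: "continuous_on UNIV f" and A: "compact A"
  shows "integral ((+) k ` A) f = integral A (\<lambda>x. f (k + x))"
proof -
  have d: "\<And>x. x \<in> A \<Longrightarrow> ((+) k has_derivative (\<lambda>h. h)) (at x within A)"
    by (auto intro!: derivative_eq_intros)
  have inj: "inj_on ((+) k) A" by (auto simp: inj_on_def)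
  have kA: "compact ((+) k ` A)" using compact_translation[OF A] .
  have fi: "f absolutely_integrable_on ((+) k ` A)"
    using abs_int_cont[OF f _ compact_imp_bounded[OF kA]] lmeasurable_compact[OF kA] by (auto simp: fmeasurableD)
  have "matrix (\<lambda>h::real^'m::{finite,wellorder}. h) = mat 1" using matrix_id_mat_1 by (simp add: id_def)
  then show ?thesis
    using cov_real[OF _ d inj fi] lmeasurable_compact[OF A] by (simp add: fmeasurableD)
qed

lemma tile:
  fixes f :: "real^'m::{finite,wellorder} \<Rightarrow> real"
  assumes f: "continuous_on UNIV f" and per: "\<And>x k. k \<in> Zv \<Longrightarrow> f (x + k) = f x"
    and S: "compact S"
    and cover: "\<And>x. \<exists>k\<in>Zv. x - k \<in> S"
    and ovl: "\<And>m. m \<in> Zv \<Longrightarrow> m \<noteq> 0 \<Longrightarrow> negligible {x\<in>S. x - m \<in> S}"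
  shows "integral S f = integral unit_cube f"
proof -
  let ?C = "unit_cube :: (real^'m::{finite,wellorder}) set"
  obtain B where B: "B > 0" "\<And>x. x \<in> S \<Longrightarrow> norm x \<le> B"
    using compact_imp_bounded[OF S] bounded_pos by metis
  define N where "N = nat \<lceil>B\<rceil> + 2"
  have NB: "real N \<ge> B + 2" unfolding N_def using B(1) by linarith
  define KK where "KK = {k \<in> Zv. \<forall>i. \<bar>(k::real^'m::{finite,wellorder})$i\<bar> \<le> real N}"
  have fin: "finite KK" unfolding KK_def by (rule finite_Zv_box)
  define A where "A k = S \<inter> (+) k ` ?C" for k
  define A' where "A' k = ?C \<inter> (+) (-k) ` S" for k
  have C: "compact ?C" by (rule compact_unit_cube)
  have cA: "compact (A k)" for k unfolding A_def
    using compact_Int[OF S compact_translation[OF C]] .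
  have cA': "compact (A' k)" for k unfolding A'_def
    using compact_Int[OF C compact_translation[OF S]] .
  have AA': "(+) k ` A' k = A k" for k
  proof
    show "(+) k ` A' k \<subseteq> A k"
    proof
      fix x assume "x \<in> (+) k ` A' k"
      then obtain y s where "y \<in> ?C" "s \<in> S" "y = -k + s" "x = k + y" unfolding A'_def by auto
      then show "x \<in> A k" unfolding A_def by (auto simp: image_iff intro!: bexI[of _ "s - k"])
    qed
    show "A k \<subseteq> (+) k ` A' k"
    proof
      fix x assume "x \<in> A k"
      then obtain c where c: "c \<in> ?C" "x \<in> S" "x = k + c" unfolding A_def by auto
      then have "c \<in> A' k" unfolding A'_def by (auto intro!: image_eqI[of _ _ x])
      then show "x \<in> (+) k ` A' k" using c by auto
    qed
  qed
  have SU: "S = (\<Union>k\<in>KK. A k)"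
  proof
    show "(\<Union>k\<in>KK. A k) \<subseteq> S" unfolding A_def by auto
    show "S \<subseteq> (\<Union>k\<in>KK. A k)"
    proof
      fix x assume x: "x \<in> S"
      let ?k = "flv x"
      have "?k \<in> KK" unfolding KK_def using flv_Zv flv_bound[of x] B(2)[OF x] NB
        by (smt (verit, best) mem_Collect_eq)
      moreover have "x \<in> A ?k" unfolding A_def using x flv_cube[of x]
        by (auto simp: image_iff intro!: bexI[of _ "x - flv x"])
      ultimately show "x \<in> (\<Union>k\<in>KK. A k)" by blast
    qed
  qed
  have CU: "?C = (\<Union>k\<in>KK. A' k)"
  proof
    show "(\<Union>k\<in>KK. A' k) \<subseteq> ?C" unfolding A'_def by auto
    show "?C \<subseteq> (\<Union>k\<in>KK. A' k)"
    proof
      fix z assume z: "z \<in> ?C"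
      obtain m where m: "m \<in> Zv" "z - m \<in> S" using cover by blast
      have "-m \<in> KK" unfolding KK_def
      proof (intro CollectI conjI allI)
        show "-m \<in> Zv" using Zv_uminus[OF m(1)] .
        fix i
        have "\<bar>(z - m)$i\<bar> \<le> B" using B(2)[OF m(2)] component_le_norm_cart order_trans by blast
        moreover have "0 \<le> z$i" "z$i \<le> 1" using z by (auto simp: mem_unit_cube)
        ultimately show "\<bar>(- m)$i\<bar> \<le> real N" using NB by (auto simp: abs_le_iff)
      qed
      moreover have "z \<in> A' (-m)" unfolding A'_def using z m(2)
        by (auto simp: image_iff intro!: bexI[of _ "z - m"])
      ultimately show "z \<in> (\<Union>k\<in>KK. A' k)" by blast
    qed
  qed
  have negA: "pairwise (\<lambda>k k'. negligible (A k \<inter> A k')) KK"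
  proof (rule pairwiseI)
    fix k k' assume kk: "k \<in> KK" "k' \<in> KK" "k \<noteq> k'"
    have "A k \<inter> A k' \<subseteq> (+) k' ` (?C \<inter> (+) (k - k') ` ?C)"
    proof
      fix x assume "x \<in> A k \<inter> A k'"
      then obtain a b where ab: "a \<in> ?C" "b \<in> ?C" "x = k + a" "x = k' + b" unfolding A_def by auto
      show "x \<in> (+) k' ` (?C \<inter> (+) (k - k') ` ?C)"
      proof (rule image_eqI[of _ _ b])
        have "b = (k - k') + a" using ab by (simp add: algebra_simps)
        then show "b \<in> ?C \<inter> (+) (k - k') ` ?C" using ab by auto
      qed (use ab in auto)
    qed
    moreover have "negligible ((+) k' ` (?C \<inter> (+) (k - k') ` ?C))"
    proof (rule negligible_translation)
      have "k - k' \<in> Zv" "k - k' \<noteq> 0" using kk Zv_diff unfolding KK_def by auto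
      from neg_cube_overlap[OF this] show "negligible (?C \<inter> (+) (k - k') ` ?C)"
        by (simp add: add.commute)
    qed
    ultimately show "negligible (A k \<inter> A k')" using negligible_subset by blast
  qed
  have negA': "pairwise (\<lambda>k k'. negligible (A' k \<inter> A' k')) KK"
  proof (rule pairwiseI)
    fix k k' assume kk: "k \<in> KK" "k' \<in> KK" "k \<noteq> k'"
    have "A' k \<inter> A' k' \<subseteq> (+) (-k) ` {x\<in>S. x - (k - k') \<in> S}"
    proof
      fix z assume "z \<in> A' k \<inter> A' k'"
      then obtain a b where ab: "a \<in> S" "b \<in> S" "z = -k + a" "z = -k' + b" unfolding A'_def by auto
      show "z \<in> (+) (-k) ` {x\<in>S. x - (k - k') \<in> S}"
        by (rule image_eqI[of _ _ a]) (use ab in \<open>auto simp: algebra_simps\<close>)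
    qed
    moreover have "negligible ((+) (-k) ` {x\<in>S. x - (k - k') \<in> S})"
      using kk Zv_diff unfolding KK_def by (intro negligible_translation ovl) auto
    ultimately show "negligible (A' k \<inter> A' k')" using negligible_subset by blast
  qed
  have eqk: "integral (A k) f = integral (A' k) f" if "k \<in> KK" for k
  proof -
    have "integral (A k) f = integral (A' k) (\<lambda>x. f (k + x))"
      using trans_integral[OF f cA'[of k], of k] AA' by simp
    also have "\<dots> = integral (A' k) f"
    proof -
      have "k \<in> Zv" using that unfolding KK_def by blast
      then have "\<And>x. f (k + x) = f x" using per by (metis add.commute)
      then show ?thesis by simp
    qed
    finally show ?thesis .
  qed
  have "(f has_integral (\<Sum>k\<in>KK. integral (A k) f)) (\<Union>k\<in>KK. A k)"
    by (rule has_integral_UN[OF fin has_integral_cont_compact[OF f cA] negA])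
  then have i1: "(f has_integral (\<Sum>k\<in>KK. integral (A k) f)) S" using SU by simp
  have "(f has_integral (\<Sum>k\<in>KK. integral (A' k) f)) (\<Union>k\<in>KK. A' k)"
    by (rule has_integral_UN[OF fin has_integral_cont_compact[OF f cA'] negA'])
  then have i2: "(f has_integral (\<Sum>k\<in>KK. integral (A k) f)) ?C" using CU eqk by simp
  show ?thesis using i1 i2 by (simp add: integral_unique)
qed

lemma cv_wo:
  fixes f :: "real^'m::{finite,wellorder} \<Rightarrow> real"
  assumes f: "continuous_on UNIV f" and per: "\<And>x k. k \<in> Zv \<Longrightarrow> f (x + k) = f x"
    and der: "\<And>x. (g has_derivative (\<lambda>v. M x *v v)) (at x)"
    and inj: "inj g" and surj: "surj g"
    and gper: "\<And>x k. k \<in> Zv \<Longrightarrow> g (x + k) = g x + k"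
  shows "integral unit_cube (\<lambda>x. \<bar>det (M x)\<bar> * f (g x)) = integral unit_cube f"
proof -
  let ?C = "unit_cube :: (real^'m::{finite,wellorder}) set"
  have gc: "continuous_on UNIV g"
    using der has_derivative_continuous continuous_at_imp_continuous_on by blast
  have S: "compact (g ` ?C)" using compact_continuous_image[OF continuous_on_subset[OF gc] compact_unit_cube] by blast
  have cover: "\<exists>k\<in>Zv. x - k \<in> g ` ?C" for x
  proof -
    obtain y where y: "x = g y" using surj by (metis surjD)
    have "g y = g ((y - flv y) + flv y)" by simp
    also have "\<dots> = g (y - flv y) + flv y" using gper flv_Zv by blast
    finally have "x - flv y = g (y - flv y)" using y by simp
    then show ?thesis using flv_Zv flv_cube by blast
  qed
  have ovl: "negligible {x \<in> g ` ?C. x - m \<in> g ` ?C}" if m: "m \<in> Zv" "m \<noteq> 0" for m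
  proof -
    have "{x \<in> g ` ?C. x - m \<in> g ` ?C} \<subseteq> g ` (?C \<inter> (\<lambda>x. x + m) ` ?C)"
    proof
      fix x assume "x \<in> {x \<in> g ` ?C. x - m \<in> g ` ?C}"
      then obtain a b where ab: "a \<in> ?C" "b \<in> ?C" "x = g a" "x - m = g b" by auto
      have "g (b + m) = g a" using gper[OF m(1), of b] ab by (simp add: algebra_simps)
      then have "b + m = a" using inj by (simp add: inj_eq)
      then show "x \<in> g ` (?C \<inter> (\<lambda>x. x + m) ` ?C)" using ab by auto
    qed
    moreover have "negligible (g ` (?C \<inter> (\<lambda>x. x + m) ` ?C))"
    proof (rule negligible_differentiable_image_negligible[OF order_refl neg_cube_overlap[OF m]])
      show "g differentiable_on ?C \<inter> (\<lambda>x. x + m) ` ?C"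
        using der by (meson differentiable_at_imp_differentiable_on differentiableI)
    qed
    ultimately show ?thesis using negligible_subset by blast
  qed
  have t: "integral (g ` ?C) f = integral ?C f"
    by (rule tile[OF f per S cover ovl]) auto
  have fi: "f absolutely_integrable_on (g ` ?C)"
    using abs_int_cont[OF f _ compact_imp_bounded[OF S]] lmeasurable_compact[OF S] by (auto simp: fmeasurableD)
  have "integral ?C (\<lambda>x. \<bar>det (matrix (\<lambda>v. M x *v v))\<bar> * f (g x)) = integral (g ` ?C) f"
    by (rule cov_real[OF _ _ _ fi])
       (use lmeasurable_compact[OF compact_unit_cube] der inj in \<open>auto simp: fmeasurableD intro: has_derivative_at_withinI inj_on_subset\<close>)
  then show ?thesis using t by simp
qed

lemma ti_wo:
  fixes f :: "real^'m::{finite,wellorder} \<Rightarrow> real"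
  assumes f: "continuous_on UNIV f" and per: "\<And>x k. k \<in> Zv \<Longrightarrow> f (x + k) = f x"
  shows "integral unit_cube (\<lambda>x. f (x + a)) = integral unit_cube f"
proof -
  have "integral unit_cube (\<lambda>x. \<bar>det (mat 1 :: real^'m::{finite,wellorder}^'m::{finite,wellorder})\<bar> * f (x + a)) = integral unit_cube f"
  proof (rule cv_wo[OF f per])
    show "((\<lambda>x. x + a) has_derivative (\<lambda>v. mat 1 *v v)) (at x)" for x
      by (auto intro!: derivative_eq_intros)
    show "inj (\<lambda>x::real^'m::{finite,wellorder}. x + a)" by (auto simp: inj_on_def)
    show "surj (\<lambda>x::real^'m::{finite,wellorder}. x + a)" by (metis diff_add_cancel surjI)
  next
    fix x k :: "real^'m::{finite,wellorder}"
    show "x + k + a = x + a + k" by (simp add: algebra_simps)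
  qed
  then show ?thesis by simp
qed

typedef 'a wo = "UNIV :: 'a set" morphisms rep_wo abs_wo by auto

lemma rep_abs_wo[simp]: "rep_wo (abs_wo x) = x" by (simp add: abs_wo_inverse)
lemma abs_rep_wo[simp]: "abs_wo (rep_wo x) = x" by (rule rep_wo_inverse)

lemma bij_rep_wo: "bij rep_wo" by (metis abs_rep_wo bij_betw_def inj_on_inverseI rep_abs_wo surjI)
lemma bij_abs_wo: "bij abs_wo" by (metis abs_rep_wo bij_betw_def inj_on_inverseI rep_abs_wo surjI)

instance wo :: (finite) finite
proof
  have "(UNIV :: 'a wo set) = abs_wo ` UNIV" by (metis bij_abs_wo bij_is_surj)
  then show "finite (UNIV :: 'a wo set)" by (metis finite finite_imageI)
qed

definition wo_rank :: "'a wo \<Rightarrow> nat" where "wo_rank = (SOME h. inj h)"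

lemma inj_wo_rank: "inj (wo_rank :: 'a::finite wo \<Rightarrow> nat)"
proof -
  obtain h :: "'a wo \<Rightarrow> nat" and n where "inj_on h UNIV"
    using finite_imp_inj_to_nat_seg[of "UNIV :: 'a wo set"] by auto
  then show ?thesis unfolding wo_rank_def by (metis someI_ex)
qed

instantiation wo :: (finite) linorder
begin
definition less_eq_wo :: "'a wo \<Rightarrow> 'a wo \<Rightarrow> bool" where "less_eq_wo x y \<longleftrightarrow> wo_rank x \<le> wo_rank y"
definition less_wo :: "'a wo \<Rightarrow> 'a wo \<Rightarrow> bool" where "less_wo x y \<longleftrightarrow> wo_rank x < wo_rank y"
instance
proof
  fix x y z :: "'a wo"
  show "(x < y) = (x \<le> y \<and> \<not> y \<le> x)" by (auto simp: less_eq_wo_def less_wo_def)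
  show "x \<le> x" by (simp add: less_eq_wo_def)
  show "x \<le> y \<Longrightarrow> y \<le> z \<Longrightarrow> x \<le> z" by (simp add: less_eq_wo_def)
  show "x \<le> y \<Longrightarrow> y \<le> x \<Longrightarrow> x = y" using inj_wo_rank[where 'a='a]
    unfolding less_eq_wo_def by (meson antisym injD)
  show "x \<le> y \<or> y \<le> x" by (auto simp: less_eq_wo_def)
qed
end

instance wo :: (finite) wellorder
proof
  fix P :: "'a wo \<Rightarrow> bool" and a :: "'a wo" assume step: "\<And>x. (\<And>y. y < x \<Longrightarrow> P y) \<Longrightarrow> P x"
  show "P a"
    by (induct a rule: measure_induct_rule[where f=wo_rank]) (rule step, simp add: less_wo_def)
qed

definition tv :: "real^'n \<Rightarrow> real^('n wo)" where "tv x = (\<chi> i. x $ rep_wo i)"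
definition fv :: "real^('n wo) \<Rightarrow> real^'n" where "fv y = (\<chi> j. y $ abs_wo j)"

lemma fv_tv[simp]: "fv (tv x) = x" by (simp add: fv_def tv_def vec_eq_iff)
lemma tv_fv[simp]: "tv (fv y) = y" by (simp add: fv_def tv_def vec_eq_iff)
lemma tv_nth[simp]: "tv x $ i = x $ rep_wo i" by (simp add: tv_def)
lemma fv_nth[simp]: "fv y $ j = y $ abs_wo j" by (simp add: fv_def)

lemma linear_tv: "linear tv" by (rule linearI) (auto simp: vec_eq_iff)
lemma linear_fv: "linear fv" by (rule linearI) (auto simp: vec_eq_iff)
lemma bl_tv: "bounded_linear tv" using linear_tv linear_conv_bounded_linear by blast
lemma bl_fv: "bounded_linear fv" using linear_fv linear_conv_bounded_linear by blast
lemma tv_add: "tv (x + y) = tv x + tv y" by (simp add: vec_eq_iff)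
lemma fv_add: "fv (x + y) = fv x + fv y" by (simp add: vec_eq_iff)

lemma fv_Zv: "k \<in> Zv \<Longrightarrow> fv k \<in> Zv" by (simp add: Zv_def)
lemma tv_Zv: "k \<in> Zv \<Longrightarrow> tv k \<in> Zv" by (simp add: Zv_def)

lemma mem_fv_image: "x \<in> fv ` A \<longleftrightarrow> tv x \<in> A"
proof
  assume "x \<in> fv ` A" then obtain y where "y \<in> A" "x = fv y" by auto
  then show "tv x \<in> A" by simp
next
  assume "tv x \<in> A" then show "x \<in> fv ` A" by (rule image_eqI[rotated]) simp
qed

lemma mem_tv_image: "x \<in> tv ` A \<longleftrightarrow> fv x \<in> A"
proof
  assume "x \<in> tv ` A" then obtain y where "y \<in> A" "x = tv y" by auto
  then show "fv x \<in> A" by simp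
next
  assume "fv x \<in> A" then show "x \<in> tv ` A" by (rule image_eqI[rotated]) simp
qed

lemma tv_0: "tv 0 = 0" and tv_One: "tv One = One"
  unfolding vec_eq_iff tv_nth One_cart zero_index by simp_all

lemma fv_cbox: "fv ` cbox u v = cbox (fv u) (fv v)"
proof -
  have "x \<in> fv ` cbox u v \<longleftrightarrow> x \<in> cbox (fv u) (fv v)" for x
  proof -
    have "x \<in> fv ` cbox u v \<longleftrightarrow> tv x \<in> cbox u v" by (rule mem_fv_image)
    also have "\<dots> \<longleftrightarrow> (\<forall>i. u$i \<le> x $ rep_wo i \<and> x $ rep_wo i \<le> v$i)" by (simp add: mem_box_cart)
    also have "\<dots> \<longleftrightarrow> (\<forall>j. u$abs_wo j \<le> x $ j \<and> x $ j \<le> v$abs_wo j)" by (metis abs_rep_wo rep_abs_wo)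
    also have "\<dots> \<longleftrightarrow> x \<in> cbox (fv u) (fv v)" by (simp add: mem_box_cart)
    finally show ?thesis .
  qed
  then show ?thesis by blast
qed

lemma tv_cbox: "tv ` cbox u v = cbox (tv u) (tv v)"
proof -
  have "x \<in> tv ` cbox u v \<longleftrightarrow> x \<in> cbox (tv u) (tv v)" for x
  proof -
    have "x \<in> tv ` cbox u v \<longleftrightarrow> fv x \<in> cbox u v" by (rule mem_tv_image)
    also have "\<dots> \<longleftrightarrow> (\<forall>i. u$i \<le> x $ abs_wo i \<and> x $ abs_wo i \<le> v$i)" by (simp add: mem_box_cart)
    also have "\<dots> \<longleftrightarrow> (\<forall>j. u$rep_wo j \<le> x $ j \<and> x $ j \<le> v$rep_wo j)" by (metis abs_rep_wo rep_abs_wo)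
    also have "\<dots> \<longleftrightarrow> x \<in> cbox (tv u) (tv v)" by (simp add: mem_box_cart)
    finally show ?thesis .
  qed
  then show ?thesis by blast
qed

lemma content_fv: "measure lborel (fv ` cbox u v) = measure lborel (cbox u v)"
proof (cases "cbox u v = {}")
  case True then show ?thesis by simp
next
  case False
  then have F: "cbox (fv u) (fv v) \<noteq> {}" using fv_cbox by (metis image_is_empty)
  have "measure lborel (fv ` cbox u v) = (\<Prod>j\<in>UNIV. v $ abs_wo j - u $ abs_wo j)"
    unfolding fv_cbox content_cbox_cart[OF F] by simp
  also have "\<dots> = (\<Prod>i\<in>UNIV. v $ i - u $ i)"
    using prod.reindex_bij_betw[OF bij_abs_wo, of "\<lambda>i. v $ i - u $ i"] by simp
  also have "\<dots> = measure lborel (cbox u v)" using content_cbox_cart[OF False] by simp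
  finally show ?thesis .
qed

lemma integral_fv:
  fixes h :: "real^'n \<Rightarrow> real"
  assumes "h integrable_on unit_cube"
  shows "integral unit_cube (\<lambda>y. h (fv y)) = integral unit_cube h"
proof -
  have "((\<lambda>y. h (fv y)) has_integral (1 / 1) *\<^sub>R integral unit_cube h) (tv ` cbox 0 One)"
  proof (rule has_integral_twiddle[where g=fv and h=tv])
    show "continuous (at x) fv" for x using bl_fv linear_continuous_at by blast
    show "\<exists>w z. fv ` cbox u v = cbox w z" for u v using fv_cbox by blast
    show "\<exists>w z. tv ` cbox u v = cbox w z" for u v using tv_cbox by blast
    show "measure lborel (fv ` cbox u v) = 1 * measure lborel (cbox u v)" for u v using content_fv by simp
    show "(h has_integral integral unit_cube h) (cbox 0 One)"
      using assms unfolding unit_cube_def by (simp add: integrable_integral)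
  qed auto
  moreover have "tv ` cbox 0 One = (cbox 0 One :: (real^('n wo)) set)"
    unfolding tv_cbox tv_0 tv_One ..
  ultimately show ?thesis unfolding unit_cube_def by (simp add: integral_unique)
qed

lemma swapidseq_conj_wo:
  "swapidseq n p \<Longrightarrow> swapidseq n (rep_wo \<circ> p \<circ> abs_wo)"
proof (induct n p rule: swapidseq.induct)
  case id
  show ?case by (simp add: comp_def id_def)
next
  case (comp_Suc n p a b)
  have eq: "rep_wo \<circ> (Transposition.transpose a b \<circ> p) \<circ> abs_wo = Transposition.transpose (rep_wo a) (rep_wo b) \<circ> (rep_wo \<circ> p \<circ> abs_wo)"
  proof
    fix x
    show "(rep_wo \<circ> (Transposition.transpose a b \<circ> p) \<circ> abs_wo) x = (Transposition.transpose (rep_wo a) (rep_wo b) \<circ> (rep_wo \<circ> p \<circ> abs_wo)) x"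
      using transpose_apply_commute[OF bij_rep_wo, of "rep_wo a" "rep_wo b" "p (abs_wo x)"] bij_rep_wo
      by (simp add: inv_f_f[OF bij_is_inj[OF bij_rep_wo]])
  qed
  have ne: "rep_wo a \<noteq> rep_wo b" using comp_Suc(3) by (metis abs_rep_wo)
  show ?case unfolding eq by (rule swapidseq.comp_Suc[OF comp_Suc(2) ne])
qed

lemma sign_conj_wo:
  fixes p :: "'a::finite wo \<Rightarrow> 'a wo"
  assumes "p permutes UNIV"
  shows "sign (rep_wo \<circ> p \<circ> abs_wo) = sign p"
proof -
  have "permutation p" using permutes_imp_permutation[OF _ assms] by simp
  then obtain n where n: "swapidseq n p" by (auto simp: permutation_def)
  have "evenperm p = even n" by (rule evenperm_unique[OF n refl])
  moreover have "evenperm (rep_wo \<circ> p \<circ> abs_wo) = even n"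
    by (rule evenperm_unique[OF swapidseq_conj_wo[OF n] refl])
  ultimately show ?thesis by (simp add: sign_def)
qed

lemma det_wo:
  fixes A :: "real^'n::finite^'n"
  shows "det (\<chi> (i::'n wo) (j::'n wo). A $ rep_wo i $ rep_wo j) = det A"
proof -
  let ?B = "\<chi> (i::'n wo) (j::'n wo). A $ rep_wo i $ rep_wo j"
  let ?cj = "\<lambda>p::'n wo \<Rightarrow> 'n wo. rep_wo \<circ> p \<circ> abs_wo"
  define P1 where "P1 = {p. p permutes (UNIV :: 'n wo set)}"
  define P2 where "P2 = {p. p permutes (UNIV :: 'n set)}"
  have bij: "bij_betw ?cj P1 P2"
  proof (rule bij_betw_byWitness[where f'="\<lambda>q. abs_wo \<circ> q \<circ> rep_wo"])
    show "\<forall>p\<in>P1. abs_wo \<circ> ?cj p \<circ> rep_wo = p" by (auto simp: fun_eq_iff)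
    show "\<forall>q\<in>P2. ?cj (abs_wo \<circ> q \<circ> rep_wo) = q" by (auto simp: fun_eq_iff)
    show "?cj ` P1 \<subseteq> P2"
    proof
      fix q assume "q \<in> ?cj ` P1"
      then obtain p where p: "p permutes (UNIV :: 'n wo set)" "q = ?cj p" unfolding P1_def by auto
      have "bij p" using permutes_bij[OF p(1)] .
      then have "bij q" unfolding p(2) by (intro bij_comp bij_rep_wo bij_abs_wo)
      then show "q \<in> P2" unfolding P2_def by (auto intro: bij_imp_permutes)
    qed
    show "(\<lambda>q. abs_wo \<circ> q \<circ> rep_wo) ` P2 \<subseteq> P1"
    proof
      fix q assume "q \<in> (\<lambda>q. abs_wo \<circ> q \<circ> rep_wo) ` P2"
      then obtain p where p: "p permutes (UNIV :: 'n set)" "q = abs_wo \<circ> p \<circ> rep_wo" unfolding P2_def by auto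
      have "bij p" using permutes_bij[OF p(1)] .
      then have "bij q" unfolding p(2) by (intro bij_comp bij_rep_wo bij_abs_wo)
      then show "q \<in> P1" unfolding P1_def by (auto intro: bij_imp_permutes)
    qed
  qed
  have "det ?B = (\<Sum>p\<in>{p. p permutes (UNIV :: 'n wo set)}. of_int (sign p) * (\<Prod>i\<in>UNIV. A $ rep_wo i $ rep_wo (p i)))"
    unfolding det_def by simp
  also have "\<dots> = (\<Sum>p\<in>{p. p permutes (UNIV :: 'n wo set)}. of_int (sign (?cj p)) * (\<Prod>j\<in>UNIV. A $ j $ ?cj p j))"
  proof (rule sum.cong[OF refl])
    fix p assume p: "p \<in> {p. p permutes (UNIV :: 'n wo set)}"
    have "(\<Prod>i\<in>UNIV. A $ rep_wo i $ rep_wo (p i)) = (\<Prod>i\<in>UNIV. (\<lambda>j. A $ j $ ?cj p j) (rep_wo i))" by simp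
    also have "\<dots> = (\<Prod>j\<in>UNIV. A $ j $ ?cj p j)"
      using prod.reindex_bij_betw[OF bij_rep_wo, of "\<lambda>j. A $ j $ ?cj p j"] by simp
    finally show "of_int (sign p) * (\<Prod>i\<in>UNIV. A $ rep_wo i $ rep_wo (p i)) = of_int (sign (?cj p)) * (\<Prod>j\<in>UNIV. A $ j $ ?cj p j)"
      using sign_conj_wo[of p] p by simp
  qed
  also have "\<dots> = (\<Sum>q\<in>{p. p permutes (UNIV :: 'n set)}. of_int (sign q) * (\<Prod>j\<in>UNIV. A $ j $ q j))"
    using sum.reindex_bij_betw[OF bij, of "\<lambda>q. of_int (sign q) * (\<Prod>j\<in>UNIV. A $ j $ q j)"] unfolding P1_def P2_def by simp
  also have "\<dots> = det A" unfolding det_def by simp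
  finally show ?thesis .
qed

definition Mt :: "(real^'n \<Rightarrow> real^'n^'n) \<Rightarrow> real^('n wo) \<Rightarrow> real^('n wo)^('n wo)" where
  "Mt M y = (\<chi> i j. M (fv y) $ rep_wo i $ rep_wo j)"

lemma der_transfer:
  assumes "(g has_derivative (\<lambda>v. M (fv y) *v v)) (at (fv y))"
  shows "((\<lambda>y. tv (g (fv y))) has_derivative (\<lambda>v. Mt M y *v v)) (at y)"
proof -
  have d1: "(fv has_derivative fv) (at y)" using bl_fv bounded_linear_imp_has_derivative by blast
  have d2: "((\<lambda>y. g (fv y)) has_derivative (\<lambda>v. M (fv y) *v fv v)) (at y)"
    using has_derivative_compose[OF d1 assms] .
  have d3: "(tv has_derivative tv) (at (g (fv y)))" using bl_tv bounded_linear_imp_has_derivative by blast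
  have d4: "((\<lambda>y. tv (g (fv y))) has_derivative (\<lambda>v. tv (M (fv y) *v fv v))) (at y)"
    using has_derivative_compose[OF d2 d3] .
  have eq: "tv (M (fv y) *v fv v) = Mt M y *v v" for v
  proof -
    have "tv (M (fv y) *v fv v) $ i = (Mt M y *v v) $ i" for i
    proof -
      have "tv (M (fv y) *v fv v) $ i = (\<Sum>j\<in>UNIV. M (fv y) $ rep_wo i $ j * v $ abs_wo j)"
        by (simp add: matrix_vector_mult_def)
      also have "\<dots> = (\<Sum>k\<in>UNIV. M (fv y) $ rep_wo i $ rep_wo k * v $ abs_wo (rep_wo k))"
        using sum.reindex_bij_betw[OF bij_rep_wo, of "\<lambda>j. M (fv y) $ rep_wo i $ j * v $ abs_wo j"] by simp
      also have "\<dots> = (Mt M y *v v) $ i" by (simp add: matrix_vector_mult_def Mt_def)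
      finally show ?thesis .
    qed
    then show ?thesis by (simp add: vec_eq_iff)
  qed
  show ?thesis using d4 unfolding eq .
qed

lemma cont_fv_comp: "continuous_on UNIV f \<Longrightarrow> continuous_on UNIV (\<lambda>y. f (fv y))"
  by (rule continuous_on_compose2[OF _ linear_continuous_on[OF bl_fv]]) auto

lemma cv_n:
  fixes f :: "real^'n \<Rightarrow> real"
  assumes f: "continuous_on UNIV f" and per: "\<And>x k. k \<in> Zv \<Longrightarrow> f (x + k) = f x"
    and der: "\<And>x. (g has_derivative (\<lambda>v. M x *v v)) (at x)"
    and inj: "inj g" and surj: "surj g"
    and gper: "\<And>x k. k \<in> Zv \<Longrightarrow> g (x + k) = g x + k"
    and dc: "continuous_on UNIV (\<lambda>x. det (M x))"
  shows "integral unit_cube (\<lambda>x. \<bar>det (M x)\<bar> * f (g x)) = integral unit_cube f"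
proof -
  define ft where "ft y = f (fv y)" for y
  define gt where "gt y = tv (g (fv y))" for y
  have ftc: "continuous_on UNIV ft" unfolding ft_def[abs_def] using cont_fv_comp[OF f] .
  have A: "integral unit_cube (\<lambda>y. \<bar>det (Mt M y)\<bar> * ft (gt y)) = integral unit_cube ft"
  proof (rule cv_wo[OF ftc])
    show "ft (x + k) = ft x" if "k \<in> Zv" for x k
      unfolding ft_def using per[OF fv_Zv[OF that]] by (simp add: fv_add)
    show "(gt has_derivative (\<lambda>v. Mt M x *v v)) (at x)" for x
      unfolding gt_def[abs_def] by (rule der_transfer) (rule der)
    show "inj gt" unfolding gt_def inj_def using inj by (metis fv_tv injD tv_fv)
    show "surj gt"
    proof -
      have "y \<in> range gt" for y
      proof -
        obtain x where "fv y = g x" using surj by (metis surjD)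
        then have "gt (tv x) = y" unfolding gt_def by (metis fv_tv tv_fv)
        then show ?thesis by blast
      qed
      then show ?thesis by blast
    qed
    show "gt (x + k) = gt x + k" if "k \<in> Zv" for x k
      unfolding gt_def using gper[OF fv_Zv[OF that]] by (simp add: fv_add tv_add)
  qed
  have eq: "(\<lambda>y. \<bar>det (Mt M y)\<bar> * ft (gt y)) = (\<lambda>y. (\<lambda>x. \<bar>det (M x)\<bar> * f (g x)) (fv y))"
    unfolding Mt_def ft_def gt_def det_wo by simp
  have gc: "continuous_on UNIV g"
    using der has_derivative_continuous continuous_at_imp_continuous_on by blast
  have iH: "(\<lambda>x. \<bar>det (M x)\<bar> * f (g x)) integrable_on unit_cube"
    unfolding unit_cube_def
    by (rule integrable_continuous, rule continuous_on_subset[of UNIV])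
       (auto intro!: continuous_intros dc continuous_on_compose2[OF f gc])
  have iF: "f integrable_on unit_cube"
    unfolding unit_cube_def by (rule integrable_continuous, rule continuous_on_subset[OF f]) auto
  have "integral unit_cube (\<lambda>x. \<bar>det (M x)\<bar> * f (g x)) = integral unit_cube (\<lambda>y. (\<lambda>x. \<bar>det (M x)\<bar> * f (g x)) (fv y))"
    using integral_fv[OF iH] by simp
  also have "\<dots> = integral unit_cube ft" using A eq by simp
  also have "\<dots> = integral unit_cube f" unfolding ft_def by (rule integral_fv[OF iF])
  finally show ?thesis .
qed

lemma ti_n:
  fixes f :: "real^'n \<Rightarrow> real"
  assumes f: "continuous_on UNIV f" and per: "\<And>x k. k \<in> Zv \<Longrightarrow> f (x + k) = f x"
  shows "integral unit_cube (\<lambda>x. f (x + a)) = integral unit_cube f"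
proof -
  define ft where "ft y = f (fv y)" for y
  have ftc: "continuous_on UNIV ft" unfolding ft_def[abs_def] using cont_fv_comp[OF f] .
  have A: "integral unit_cube (\<lambda>y. ft (y + tv a)) = integral unit_cube ft"
  proof (rule ti_wo[OF ftc])
    show "ft (x + k) = ft x" if "k \<in> Zv" for x k
      unfolding ft_def using per[OF fv_Zv[OF that]] by (simp add: fv_add)
  qed
  have eq: "(\<lambda>y. ft (y + tv a)) = (\<lambda>y. (\<lambda>x. f (x + a)) (fv y))"
    unfolding ft_def by (simp add: fv_add)
  have fa: "continuous_on UNIV (\<lambda>x. f (x + a))"
    by (rule continuous_on_compose2[OF f]) (auto intro!: continuous_intros)
  have iH: "(\<lambda>x. f (x + a)) integrable_on unit_cube"
    unfolding unit_cube_def by (rule integrable_continuous, rule continuous_on_subset[OF fa]) auto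
  have iF: "f integrable_on unit_cube"
    unfolding unit_cube_def by (rule integrable_continuous, rule continuous_on_subset[OF f]) auto
  have "integral unit_cube (\<lambda>x. f (x + a)) = integral unit_cube (\<lambda>y. (\<lambda>x. f (x + a)) (fv y))"
    using integral_fv[OF iH] by simp
  also have "\<dots> = integral unit_cube ft" using A eq by simp
  also have "\<dots> = integral unit_cube f" unfolding ft_def by (rule integral_fv[OF iF])
  finally show ?thesis .
qed

lemma smooth_Rn_D:
  assumes "smooth_Rn f"
  shows "\<And>x. f differentiable (at x)" "\<And>v. smooth_Rn (\<lambda>x. frechet_derivative f (at x) v)"
  using assms by (auto elim: smooth_Rn.cases)

lemma smooth_has_der: "smooth_Rn f \<Longrightarrow> (f has_derivative frechet_derivative f (at x)) (at x)"
  using smooth_Rn_D(1) frechet_derivative_works by blast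

lemma diff_cont: "(\<And>x. f differentiable (at x)) \<Longrightarrow> continuous_on UNIV f"
  by (simp add: continuous_at_imp_continuous_on differentiable_imp_continuous_within)

lemma smooth_cont: "smooth_Rn f \<Longrightarrow> continuous_on UNIV f"
  using smooth_Rn_D(1) diff_cont by blast

lemma smooth_dir_cont: "smooth_Rn f \<Longrightarrow> continuous_on UNIV (\<lambda>x. frechet_derivative f (at x) v)"
  using smooth_Rn_D(2) smooth_cont by blast

lemma basis_exp: "(\<Sum>j\<in>UNIV. (v::real^'n) $ j *\<^sub>R axis j 1) = v"
  by (simp add: vec_eq_iff axis_def sum_component if_distrib cong: if_cong)

lemma fd_expand:
  assumes "f differentiable (at x)"
  shows "frechet_derivative f (at x) (v::real^'n) = (\<Sum>j\<in>UNIV. v $ j * frechet_derivative f (at x) (axis j 1))"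
proof -
  have l: "linear (frechet_derivative f (at x))"
    using assms frechet_derivative_works has_derivative_linear by blast
  have "frechet_derivative f (at x) v = frechet_derivative f (at x) (\<Sum>j\<in>UNIV. v $ j *\<^sub>R axis j 1)"
    by (simp add: basis_exp)
  also have "\<dots> = (\<Sum>j\<in>UNIV. v $ j * frechet_derivative f (at x) (axis j 1))"
    using l by (simp add: linear_sum linear_scale)
  finally show ?thesis .
qed

lemma Zn_per: "Zn_periodic f \<Longrightarrow> k \<in> Zv \<Longrightarrow> f (x + k) = f x"
  unfolding Zn_periodic_def Zv_def by blast

lemma per_fd:
  assumes d: "\<And>x. f differentiable (at x)" and per: "\<And>x k. k \<in> Zv \<Longrightarrow> f (x + k) = f x"
    and k: "k \<in> Zv"
  shows "frechet_derivative f (at (x + k)) = frechet_derivative f (at x)"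
proof -
  have d1: "(f has_derivative frechet_derivative f (at (x + k))) (at (x + k))"
    using d frechet_derivative_works by blast
  have d0: "((\<lambda>y. y + k) has_derivative (\<lambda>h. h)) (at x)" by (auto intro!: derivative_eq_intros)
  have "((\<lambda>y. f (y + k)) has_derivative frechet_derivative f (at (x + k))) (at x)"
    using has_derivative_compose[OF d0 d1] by simp
  moreover have "(\<lambda>y. f (y + k)) = f" using per[OF k] by auto
  ultimately show ?thesis using frechet_derivative_at by metis
qed

lemma cont_per_bounded:
  fixes G :: "real^'n \<Rightarrow> real"
  assumes c: "continuous_on UNIV G" and per: "\<And>x k. k \<in> Zv \<Longrightarrow> G (x + k) = G x"
  obtains B where "\<And>x. \<bar>G x\<bar> \<le> B"
proof -
  have "compact (G ` unit_cube)"
    using compact_continuous_image[OF continuous_on_subset[OF c] compact_unit_cube] by blast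
  then obtain B where B: "\<And>y. y \<in> G ` unit_cube \<Longrightarrow> norm y \<le> B"
    using compact_imp_bounded bounded_iff by metis
  have "\<bar>G x\<bar> \<le> B" for x
  proof -
    have "G x = G ((x - flv x) + flv x)" by simp
    also have "\<dots> = G (x - flv x)" using per flv_Zv by blast
    finally show ?thesis using B[of "G (x - flv x)"] flv_cube[of x] by auto
  qed
  then show ?thesis using that by blast
qed

lemma dir_deriv:
  assumes "\<And>y. (F has_derivative DF y) (at y)"
  shows "((\<lambda>s. F (x + s *\<^sub>R e)) has_real_derivative DF (x + s *\<^sub>R e) e) (at s)"
proof -
  have d0: "((\<lambda>s. x + s *\<^sub>R e) has_derivative (\<lambda>h. h *\<^sub>R e)) (at s)"
    by (auto intro!: derivative_eq_intros)
  have "((\<lambda>s. F (x + s *\<^sub>R e)) has_derivative (\<lambda>h. DF (x + s *\<^sub>R e) (h *\<^sub>R e))) (at s)"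
    using has_derivative_compose[OF d0 assms] .
  moreover have "linear (DF (x + s *\<^sub>R e))" using assms has_derivative_linear by blast
  ultimately have "((\<lambda>s. F (x + s *\<^sub>R e)) has_derivative (\<lambda>h. h * DF (x + s *\<^sub>R e) e)) (at s)"
    by (simp add: linear_scale)
  moreover have "(\<lambda>h. h * DF (x + s *\<^sub>R e) e) = (*) (DF (x + s *\<^sub>R e) e)" by (auto simp: fun_eq_iff)
  ultimately show ?thesis by (simp add: has_field_derivative_def)
qed

lemma ibp0:
  fixes F :: "real^'n \<Rightarrow> real"
  assumes d: "\<And>x. F differentiable (at x)" and per: "\<And>x k. k \<in> Zv \<Longrightarrow> F (x + k) = F x"
    and c: "continuous_on UNIV (\<lambda>x. frechet_derivative F (at x) e)"
  shows "integral unit_cube (\<lambda>x. frechet_derivative F (at x) e) = 0"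
proof -
  define G where "G x = frechet_derivative F (at x) e" for x
  have Fd: "\<And>y. (F has_derivative frechet_derivative F (at y)) (at y)"
    using d frechet_derivative_works by blast
  have Fc: "continuous_on UNIV F" using diff_cont d by blast
  have Gper: "G (x + k) = G x" if "k \<in> Zv" for x k
    unfolding G_def using per_fd[OF d per that] by simp
  obtain B where B: "\<And>x. \<bar>G x\<bar> \<le> B" using cont_per_bounded[of G] c Gper unfolding G_def by blast
  define t where "t n = inverse (real (Suc n))" for n
  have tpos: "t n > 0" for n unfolding t_def by simp
  define h where "h n x = (F (x + t n *\<^sub>R e) - F x) / t n" for n x
  have Fsc: "continuous_on UNIV (\<lambda>x. F (x + s *\<^sub>R e))" for s
    by (rule continuous_on_compose2[OF Fc]) (auto intro!: continuous_intros)
  have intF: "(\<lambda>x. F (x + s *\<^sub>R e)) integrable_on unit_cube" for s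
    unfolding unit_cube_def by (rule integrable_continuous, rule continuous_on_subset[OF Fsc]) auto
  have intF0: "F integrable_on unit_cube"
    unfolding unit_cube_def by (rule integrable_continuous, rule continuous_on_subset[OF Fc]) auto
  have hint: "(h n has_integral 0) unit_cube" for n
  proof -
    have "((\<lambda>x. F (x + t n *\<^sub>R e) - F x) has_integral
        (integral unit_cube (\<lambda>x. F (x + t n *\<^sub>R e)) - integral unit_cube F)) unit_cube"
      by (intro has_integral_diff integrable_integral intF intF0)
    moreover have "integral unit_cube (\<lambda>x. F (x + t n *\<^sub>R e)) = integral unit_cube F"
      by (rule ti_n[OF Fc per])
    ultimately have "((\<lambda>x. F (x + t n *\<^sub>R e) - F x) has_integral 0) unit_cube" by simp
    from has_integral_mult_left[OF this, of "inverse (t n)"] show ?thesis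
      unfolding h_def[abs_def] by (simp add: divide_inverse)
  qed
  have conv: "(\<lambda>n. h n x) \<longlonglongrightarrow> G x" for x
  proof -
    have "((\<lambda>s. F (x + s *\<^sub>R e)) has_real_derivative G x) (at 0)"
      using dir_deriv[OF Fd, of x e 0] unfolding G_def by simp
    from has_field_derivative_iff[THEN iffD1, OF this]
    have q: "((\<lambda>s. (F (x + s *\<^sub>R e) - F x) / s) \<longlongrightarrow> G x) (at 0)" by simp
    have tl: "filterlim t (at 0) sequentially"
      unfolding filterlim_at t_def using LIMSEQ_inverse_real_of_nat by auto
    have "((\<lambda>n. (F (x + t n *\<^sub>R e) - F x) / t n) \<longlongrightarrow> G x) sequentially"
      by (rule filterlim_compose[OF q tl])
    then show ?thesis unfolding h_def by simp
  qed
  have dom: "norm (h n x) \<le> B" for n x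
  proof -
    have cs: "continuous_on {0..t n} (\<lambda>s. F (x + s *\<^sub>R e))"
      by (rule continuous_on_compose2[OF Fc]) (auto intro!: continuous_intros)
    have ds: "(\<lambda>s. F (x + s *\<^sub>R e)) differentiable (at s)" for s
      using dir_deriv[OF Fd, of x e s] real_differentiable_def by blast
    obtain l z where lz: "0 < z" "z < t n" "DERIV (\<lambda>s. F (x + s *\<^sub>R e)) z :> l"
      "F (x + t n *\<^sub>R e) - F (x + 0 *\<^sub>R e) = (t n - 0) * l"
      using MVT[OF tpos cs ds] by blast
    have "l = G (x + z *\<^sub>R e)"
      using DERIV_unique[OF lz(3) dir_deriv[OF Fd, of x e z]] unfolding G_def by simp
    then have "h n x = G (x + z *\<^sub>R e)" unfolding h_def using lz(4) tpos[of n] by simp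
    then show ?thesis using B by simp
  qed
  have "(\<lambda>n. integral unit_cube (h n)) \<longlonglongrightarrow> integral unit_cube G"
  proof (rule dominated_convergence(2)[where h="\<lambda>x. B"])
    show "h n integrable_on unit_cube" for n using hint by blast
    show "(\<lambda>x. B) integrable_on unit_cube" unfolding unit_cube_def by (rule integrable_continuous) (rule continuous_on_const)
  qed (use dom conv in auto)
  moreover have "(\<lambda>n. integral unit_cube (h n)) = (\<lambda>n. 0)" using hint integral_unique by blast
  ultimately have "integral unit_cube G = 0" using LIMSEQ_unique tendsto_const by metis
  then show ?thesis unfolding G_def .
qed

lemma grad_nth: "grad f y $ i = frechet_derivative f (at y) (axis i 1)"
  by (simp add: grad_def)

lemma hess_nth: "hess f x $ i $ j = frechet_derivative (\<lambda>y. grad f y $ i) (at x) (axis j 1)"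
  by (simp add: hess_def)

lemma grad_has_der:
  fixes f :: "real^'n \<Rightarrow> real"
  assumes d: "\<And>i. (\<lambda>y. grad f y $ i) differentiable (at x)"
  shows "(grad f has_derivative (\<lambda>v. hess f x *v v)) (at x)"
proof -
  have "((\<lambda>y. grad f y \<bullet> b) has_derivative (\<lambda>v. (hess f x *v v) \<bullet> b)) (at x)" if b: "b \<in> Basis" for b
  proof -
    obtain i where i: "b = axis i 1" using b by (auto simp: Basis_vec_def)
    have e1: "(\<lambda>y. grad f y \<bullet> b) = (\<lambda>y. grad f y $ i)" unfolding i by (simp add: inner_axis)
    have L: "((\<lambda>y. grad f y $ i) has_derivative frechet_derivative (\<lambda>y. grad f y $ i) (at x)) (at x)"
      using d frechet_derivative_works by blast
    have "frechet_derivative (\<lambda>y. grad f y $ i) (at x) v = (hess f x *v v) \<bullet> b" for v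
    proof -
      have "frechet_derivative (\<lambda>y. grad f y $ i) (at x) v
          = (\<Sum>j\<in>UNIV. v $ j * frechet_derivative (\<lambda>y. grad f y $ i) (at x) (axis j 1))"
        by (rule fd_expand[OF d])
      also have "\<dots> = (hess f x *v v) $ i"
        by (simp add: matrix_vector_mult_def hess_nth mult.commute)
      finally show ?thesis unfolding i by (simp add: inner_axis)
    qed
    then have "frechet_derivative (\<lambda>y. grad f y $ i) (at x) = (\<lambda>v. (hess f x *v v) \<bullet> b)" by auto
    then show ?thesis using L e1 by simp
  qed
  then have "\<forall>b\<in>Basis. ((\<lambda>y. grad f y \<bullet> b) has_derivative (\<lambda>v. (hess f x *v v) \<bullet> b)) (at x)" by blast
  then show ?thesis by (subst has_derivative_componentwise_within) assumption
qed

lemma half_norm_der: "((\<lambda>y. norm y ^ 2 / 2) has_derivative (\<lambda>v. y \<bullet> v)) (at y)"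
proof -
  have "((\<lambda>y. y \<bullet> y / 2) has_derivative (\<lambda>v. (v \<bullet> y + y \<bullet> v) / 2)) (at y)"
    by (auto intro!: derivative_eq_intros)
  moreover have "(\<lambda>v. (v \<bullet> y + y \<bullet> v) / 2) = (\<lambda>v. y \<bullet> v)" by (auto simp: inner_commute)
  ultimately show ?thesis by (simp add: power2_norm_eq_inner)
qed

context
  fixes \<phi> :: "real^'n \<Rightarrow> real"
  assumes sm: "smooth_Rn \<phi>" and pe: "Zn_periodic \<phi>"
begin

definition "PhiT = (\<lambda>y. norm y ^ 2 / 2 + \<phi> y)"

lemma Phi_der: "(PhiT has_derivative (\<lambda>v. y \<bullet> v + frechet_derivative \<phi> (at y) v)) (at y)"
  unfolding PhiT_def by (intro has_derivative_add half_norm_der smooth_has_der[OF sm])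

lemma Phi_fd: "frechet_derivative PhiT (at y) = (\<lambda>v. y \<bullet> v + frechet_derivative \<phi> (at y) v)"
  using Phi_der frechet_derivative_at by metis

lemma grad_Phi: "grad PhiT y = y + grad \<phi> y"
  by (simp add: vec_eq_iff grad_nth Phi_fd inner_axis)

lemma grad_phi_nth_smooth: "smooth_Rn (\<lambda>y. grad \<phi> y $ i)"
  unfolding grad_nth using smooth_Rn_D(2)[OF sm] .

lemma grad_Phi_nth: "(\<lambda>y. grad PhiT y $ i) = (\<lambda>y. y $ i + grad \<phi> y $ i)"
  by (simp add: grad_Phi)

lemma grad_Phi_nth_der:
  "((\<lambda>y. grad PhiT y $ i) has_derivative (\<lambda>v. v $ i + frechet_derivative (\<lambda>y. grad \<phi> y $ i) (at x) v)) (at x)"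
  unfolding grad_Phi_nth
  by (intro has_derivative_add bounded_linear_imp_has_derivative bounded_linear_vec_nth
      smooth_has_der[OF grad_phi_nth_smooth])

lemma hess_Phi: "hess PhiT x = mat 1 + hess \<phi> x"
proof -
  have "hess PhiT x $ i $ j = (mat 1 + hess \<phi> x) $ i $ j" for i j
  proof -
    have "hess PhiT x $ i $ j = (axis j 1 :: real^'n) $ i + frechet_derivative (\<lambda>y. grad \<phi> y $ i) (at x) (axis j 1)"
      unfolding hess_nth using frechet_derivative_at[OF grad_Phi_nth_der[of i x]] by metis
    then show ?thesis by (simp add: mat_def axis_def hess_nth)
  qed
  then show ?thesis by (simp add: vec_eq_iff)
qed

lemma lap_Phi: "laplacian PhiT x = real CARD('n) + laplacian \<phi> x"
  unfolding laplacian_def hess_Phi by (simp add: sum.distrib mat_def)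

lemma gPhi_der: "(grad PhiT has_derivative (\<lambda>v. hess PhiT x *v v)) (at x)"
  by (rule grad_has_der) (use grad_Phi_nth_der in \<open>auto simp: differentiable_def\<close>)

lemma grad_phi_per: "k \<in> Zv \<Longrightarrow> grad \<phi> (x + k) = grad \<phi> x"
  unfolding grad_def using per_fd[OF smooth_Rn_D(1)[OF sm] Zn_per[OF pe]] by simp

lemma gPhi_per: "k \<in> Zv \<Longrightarrow> grad PhiT (x + k) = grad PhiT x + k"
  by (simp add: grad_Phi grad_phi_per)

lemma gPhi_inj:
  assumes pd: "\<And>x v. v \<noteq> 0 \<Longrightarrow> 0 < v \<bullet> (hess PhiT x *v v)"
  shows "inj (grad PhiT)"
proof (rule injI, rule ccontr)
  fix a b assume eq: "grad PhiT a = grad PhiT b" and ne: "a \<noteq> b"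
  define v where "v = a - b"
  have v0: "v \<noteq> 0" using ne v_def by simp
  define h where "h t = grad PhiT (b + t *\<^sub>R v) \<bullet> v" for t
  have hd: "(h has_real_derivative (hess PhiT (b + t *\<^sub>R v) *v v) \<bullet> v) (at t)" for t
  proof -
    have d0: "((\<lambda>t. b + t *\<^sub>R v) has_derivative (\<lambda>s. s *\<^sub>R v)) (at t)"
      by (auto intro!: derivative_eq_intros)
    have d1: "((\<lambda>t. grad PhiT (b + t *\<^sub>R v)) has_derivative (\<lambda>s. hess PhiT (b + t *\<^sub>R v) *v (s *\<^sub>R v))) (at t)"
      using has_derivative_compose[OF d0 gPhi_der] .
    have d2: "(h has_derivative (\<lambda>s. (hess PhiT (b + t *\<^sub>R v) *v (s *\<^sub>R v)) \<bullet> v)) (at t)"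
      unfolding h_def using has_derivative_inner_left[OF d1] .
    have "(\<lambda>s. (hess PhiT (b + t *\<^sub>R v) *v (s *\<^sub>R v)) \<bullet> v) = (*) ((hess PhiT (b + t *\<^sub>R v) *v v) \<bullet> v)"
      by (auto simp: fun_eq_iff matrix_vector_mult_scaleR mult.commute)
    then show ?thesis using d2 by (simp add: has_field_derivative_def)
  qed
  have hc: "continuous_on {0..1} h"
    using hd by (meson DERIV_continuous continuous_at_imp_continuous_on)
  obtain l z where lz: "0 < z" "z < 1" "DERIV h z :> l" "h 1 - h 0 = (1 - 0) * l"
    using MVT[of 0 1 h] hc hd real_differentiable_def by force
  have "l = (hess PhiT (b + z *\<^sub>R v) *v v) \<bullet> v" using DERIV_unique[OF lz(3) hd] .
  then have "l > 0" using pd[OF v0, of "b + z *\<^sub>R v"] by (simp add: inner_commute)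
  moreover have "h 1 = h 0" unfolding h_def v_def using eq by simp
  ultimately show False using lz(4) by simp
qed

lemma gPhi_surj: "surj (grad PhiT)"
proof -
  have pc: "continuous_on UNIV \<phi>" using smooth_cont[OF sm] .
  obtain B where B: "\<And>x. \<bar>\<phi> x\<bar> \<le> B" using cont_per_bounded[OF pc] Zn_per[OF pe] by metis
  have B0: "B \<ge> 0" using B[of 0] by simp
  have "y0 \<in> range (grad PhiT)" for y0
  proof -
    define Psi where "Psi x = PhiT x - y0 \<bullet> x" for x
    define R where "R = 2 * norm y0 + 2 * B + 2"
    have Psic: "continuous_on UNIV Psi"
    proof -
      have "continuous_on UNIV PhiT"
        using Phi_der diff_cont differentiable_def by blast
      then show ?thesis unfolding Psi_def[abs_def] by (intro continuous_intros)
    qed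
    obtain x0 where x0: "x0 \<in> cball 0 R" "\<And>y. y \<in> cball 0 R \<Longrightarrow> Psi x0 \<le> Psi y"
      using continuous_attains_inf[OF compact_cball _ continuous_on_subset[OF Psic], of 0 R]
      by (metis R_def B0 cball_eq_empty norm_ge_zero not_less subset_UNIV add_nonneg_nonneg mult_nonneg_nonneg
          zero_le_numeral add_nonneg_pos zero_less_numeral less_imp_le)
    have big: "Psi x > B" if x: "norm x \<ge> R" for x
    proof -
      let ?r = "norm x"
      have r2: "?r \<ge> 2" using x B0 unfolding R_def by (smt (verit) norm_ge_zero)
      have r3: "?r / 2 - norm y0 \<ge> B + 1" using x unfolding R_def by simp
      have "?r * (?r / 2 - norm y0) \<ge> 2 * (B + 1)"
        using mult_mono[OF r2 r3] B0 by simp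
      moreover have "y0 \<bullet> x \<le> norm y0 * ?r" using norm_cauchy_schwarz .
      moreover have "\<phi> x \<ge> -B" using B[of x] by simp
      ultimately have "?r ^ 2 / 2 + \<phi> x - y0 \<bullet> x > B"
        by (simp add: power2_eq_square algebra_simps)
      then show ?thesis unfolding Psi_def PhiT_def by simp
    qed
    have P0: "Psi 0 \<le> B" unfolding Psi_def PhiT_def using B[of 0] by simp
    have gm: "Psi x0 \<le> Psi y" for y
    proof (cases "norm y \<le> R")
      case True then show ?thesis using x0 by simp
    next
      case False
      then have "Psi y > B" using big by simp
      moreover have "Psi x0 \<le> Psi 0" using x0(2)[of 0] B0 unfolding R_def by simp
      ultimately show ?thesis using P0 by simp
    qed
    have dPsi: "(Psi has_derivative (\<lambda>v. x0 \<bullet> v + frechet_derivative \<phi> (at x0) v - y0 \<bullet> v)) (at x0)"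
      unfolding Psi_def[abs_def] by (intro has_derivative_diff Phi_der has_derivative_inner_right)
        (auto intro!: derivative_eq_intros)
    have "(\<lambda>v. x0 \<bullet> v + frechet_derivative \<phi> (at x0) v - y0 \<bullet> v) = (\<lambda>h. 0)"
      by (rule has_derivative_local_min[OF dPsi]) (use gm in auto)
    then have "\<And>i. x0 \<bullet> axis i 1 + frechet_derivative \<phi> (at x0) (axis i 1) - y0 \<bullet> axis i 1 = 0"
      by (metis (no_types, lifting))
    then have "grad PhiT x0 = y0" by (simp add: vec_eq_iff grad_Phi grad_nth inner_axis)
    then show ?thesis by blast
  qed
  then show ?thesis by blast
qed

end

lemma cont_int: "continuous_on UNIV (f :: real^'n \<Rightarrow> real) \<Longrightarrow> (f has_integral integral unit_cube f) unit_cube"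
  unfolding unit_cube_def
  by (rule integrable_integral, rule integrable_continuous, rule continuous_on_subset) auto

lemma grad_nth_cont: "smooth_Rn f \<Longrightarrow> continuous_on UNIV (\<lambda>x. grad f x $ i)"
  unfolding grad_nth by (rule smooth_dir_cont)

lemma inner_grad_cont: "smooth_Rn f \<Longrightarrow> smooth_Rn h \<Longrightarrow> continuous_on UNIV (\<lambda>x. grad f x \<bullet> grad h x)"
  unfolding inner_vec_def by (intro continuous_intros grad_nth_cont) auto

lemma hess_diag_cont: "smooth_Rn f \<Longrightarrow> continuous_on UNIV (\<lambda>x. hess f x $ i $ i)"
  unfolding hess_nth grad_nth by (intro smooth_dir_cont smooth_Rn_D(2))

lemma lap_cont: "smooth_Rn f \<Longrightarrow> continuous_on UNIV (laplacian f)"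
  unfolding laplacian_def[abs_def] by (intro continuous_intros hess_diag_cont)

lemma cont_fi:
  fixes q \<phi> :: "real^'n \<Rightarrow> real"
  assumes sq: "smooth_Rn q" and sp: "smooth_Rn \<phi>"
  shows "continuous_on UNIV (\<lambda>x. q x * grad q x $ i * grad \<phi> x $ i + (q x)^2 * hess \<phi> x $ i $ i / 2)"
proof -
  define a where "a x = grad q x $ i" for x
  define b where "b x = grad \<phi> x $ i" for x
  define c where "c x = hess \<phi> x $ i $ i" for x
  have "continuous_on UNIV a" unfolding a_def[abs_def] using grad_nth_cont[OF sq] .
  moreover have "continuous_on UNIV b" unfolding b_def[abs_def] using grad_nth_cont[OF sp] .
  moreover have "continuous_on UNIV c" unfolding c_def[abs_def] using hess_diag_cont[OF sp] .
  ultimately have "continuous_on UNIV (\<lambda>x. q x * a x * b x + (q x)^2 * c x / 2)"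
    by (intro continuous_intros smooth_cont[OF sq]) auto
  then show ?thesis unfolding a_def b_def c_def .
qed

lemma ibp_i:
  fixes q \<phi> :: "real^'n \<Rightarrow> real"
  assumes sq: "smooth_Rn q" and pq: "Zn_periodic q" and sp: "smooth_Rn \<phi>" and pp: "Zn_periodic \<phi>"
  shows "integral unit_cube (\<lambda>x. q x * grad q x $ i * grad \<phi> x $ i + (q x)^2 * hess \<phi> x $ i $ i / 2) = 0"
proof -
  define \<psi> where "\<psi> y = grad \<phi> y $ i" for y
  have s\<psi>: "smooth_Rn \<psi>" unfolding \<psi>_def grad_nth using smooth_Rn_D(2)[OF sp] .
  define F where "F x = (q x)^2 * \<psi> x / 2" for x
  have Fd: "(F has_derivative (\<lambda>v. q x * frechet_derivative q (at x) v * \<psi> x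
              + (q x)^2 * frechet_derivative \<psi> (at x) v / 2)) (at x)" for x
    unfolding F_def[abs_def]
    by (auto intro!: derivative_eq_intros smooth_has_der[OF sq] smooth_has_der[OF s\<psi>]
        simp: fun_eq_iff algebra_simps power2_eq_square)
  have Ffd: "frechet_derivative F (at x) (axis i 1) = q x * grad q x $ i * grad \<phi> x $ i + (q x)^2 * hess \<phi> x $ i $ i / 2" for x
  proof -
    have e: "frechet_derivative F (at x) = (\<lambda>v. q x * frechet_derivative q (at x) v * \<psi> x
              + (q x)^2 * frechet_derivative \<psi> (at x) v / 2)"
      using frechet_derivative_at[OF Fd[of x]] by simp
    show ?thesis unfolding e \<psi>_def[abs_def] by (simp add: grad_nth hess_nth)
  qed
  have "integral unit_cube (\<lambda>x. frechet_derivative F (at x) (axis i 1)) = 0"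
  proof (rule ibp0)
    show "F differentiable (at x)" for x using Fd differentiable_def by blast
    show "F (x + k) = F x" if "k \<in> Zv" for x k
    proof -
      have "\<psi> (x + k) = \<psi> x" unfolding \<psi>_def grad_def
        using per_fd[OF smooth_Rn_D(1)[OF sp] Zn_per[OF pp] that] by simp
      then show ?thesis unfolding F_def using Zn_per[OF pq that] by simp
    qed
    show "continuous_on UNIV (\<lambda>x. frechet_derivative F (at x) (axis i 1))"
      unfolding Ffd using cont_fi[OF sq sp] .
  qed
  then show ?thesis unfolding Ffd .
qed

lemma ibp:
  fixes q \<phi> :: "real^'n \<Rightarrow> real"
  assumes sq: "smooth_Rn q" and pq: "Zn_periodic q" and sp: "smooth_Rn \<phi>" and pp: "Zn_periodic \<phi>"
  shows "((\<lambda>x. (grad q x \<bullet> grad \<phi> x) * q x + (q x)^2 * laplacian \<phi> x / 2) has_integral 0) unit_cube"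
proof -
  let ?f = "\<lambda>i x. q x * grad q x $ i * grad \<phi> x $ i + (q x)^2 * hess \<phi> x $ i $ i / 2"
  have fi: "(?f i has_integral 0) unit_cube" for i
  proof -
    have "continuous_on UNIV (?f i)" using cont_fi[OF sq sp] .
    from cont_int[OF this] show ?thesis using ibp_i[OF assms, of i] by simp
  qed
  have "((\<lambda>x. \<Sum>i\<in>UNIV. ?f i x) has_integral (\<Sum>i\<in>UNIV. 0)) unit_cube"
    using has_integral_sum[of "UNIV" "\<lambda>i. ?f i" "\<lambda>i. 0" unit_cube] fi by simp
  moreover have "(\<lambda>x. \<Sum>i\<in>UNIV. ?f i x) = (\<lambda>x. (grad q x \<bullet> grad \<phi> x) * q x + (q x)^2 * laplacian \<phi> x / 2)"
    by (simp add: fun_eq_iff sum.distrib inner_vec_def laplacian_def sum_distrib_left sum_distrib_right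
        sum_divide_distrib algebra_simps)
  ultimately show ?thesis by simp
qed

lemma partA:
  fixes p q \<phi> :: "real^'n \<Rightarrow> real"
  assumes tp: "torus_density p" and tq: "torus_density q" and sm: "smooth_Rn \<phi>" and pe: "Zn_periodic \<phi>"
    and pd: "\<And>x v. v \<noteq> 0 \<Longrightarrow> 0 < v \<bullet> (hess (PhiT \<phi>) x *v v)"
    and mp: "\<And>x. p (grad (PhiT \<phi>) x) * det (hess (PhiT \<phi>) x) = q x"
  shows "transport_bregman_torus U_torus (\<lambda>r. r) p q (grad (PhiT \<phi>))
     = 1/2 * integral unit_cube
          (\<lambda>x. (laplacian (PhiT \<phi>) x + 1 / det (hess (PhiT \<phi>) x) - 1 - real CARD('n)) * (q x)^2)"
proof -
  define g where "g = grad (PhiT \<phi>)"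
  define H where "H = hess (PhiT \<phi>)"
  have sp: "smooth_Rn p" and perp: "Zn_periodic p" and ppos: "\<And>x. 0 < p x"
    using tp unfolding torus_density_def by auto
  have sq: "smooth_Rn q" and perq: "Zn_periodic q" and qpos: "\<And>x. 0 < q x"
    using tq unfolding torus_density_def by auto
  have pc: "continuous_on UNIV p" using smooth_cont[OF sp] .
  have qc: "continuous_on UNIV q" using smooth_cont[OF sq] .
  have gd: "\<And>x. (g has_derivative (\<lambda>v. H x *v v)) (at x)"
    unfolding g_def H_def using gPhi_der[OF sm pe] .
  have gc: "continuous_on UNIV g"
    using gd has_derivative_continuous continuous_at_imp_continuous_on by blast
  have detH: "det (H x) = q x / p (g x)" for x
    using mp[of x] ppos[of "g x"] unfolding g_def H_def by (simp add: field_simps)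
  have detpos: "det (H x) > 0" for x using detH qpos ppos by simp
  have dc: "continuous_on UNIV (\<lambda>x. det (H x))"
    unfolding detH by (intro continuous_intros qc continuous_on_compose2[OF pc gc]) (auto, metis ppos less_irrefl)
  have U1: "U_torus p = integral unit_cube (\<lambda>x. (q x)^2 / det (H x) / 2)"
  proof -
    have "integral unit_cube (\<lambda>x. \<bar>det (H x)\<bar> * (\<lambda>y. (p y)^2 / 2) (g x)) = integral unit_cube (\<lambda>y. (p y)^2 / 2)"
    proof (rule cv_n[OF _ _ gd _ _ _ dc])
      show "continuous_on UNIV (\<lambda>y. (p y)^2 / 2)" by (intro continuous_intros pc) auto
      show "(p (x + k))\<^sup>2 / 2 = (p x)\<^sup>2 / 2" if "k \<in> Zv" for x k using Zn_per[OF perp that] by simp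
      show "inj g" unfolding g_def using gPhi_inj[OF sm pe] pd by blast
      show "surj g" unfolding g_def using gPhi_surj[OF sm pe] .
      show "g (x + k) = g x + k" if "k \<in> Zv" for x k unfolding g_def using gPhi_per[OF sm pe that] .
    qed
    moreover have "\<bar>det (H x)\<bar> * (p (g x))^2 / 2 = (q x)^2 / det (H x) / 2" for x
    proof -
      have e: "q x = det (H x) * p (g x)" using mp[of x] unfolding g_def H_def by (simp add: mult.commute)
      show ?thesis unfolding e using detpos[of x] by (simp add: power2_eq_square field_simps)
    qed
    ultimately show ?thesis unfolding U_torus_def by simp
  qed
  have gx: "g x - x = grad \<phi> x" for x unfolding g_def using grad_Phi[OF sm pe] by simp
  have lapP: "laplacian (PhiT \<phi>) x = real CARD('n) + laplacian \<phi> x" for x using lap_Phi[OF sm pe] .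
  have c1: "continuous_on UNIV (\<lambda>x. (q x)^2 / det (H x) / 2)"
    by (intro continuous_intros qc dc) (auto, metis detpos less_irrefl)
  have c2: "continuous_on UNIV (\<lambda>x. (q x)^2 / 2)" by (intro continuous_intros qc) auto
  have c3: "continuous_on UNIV (\<lambda>x. (grad q x \<bullet> grad \<phi> x) * q x)"
    by (intro continuous_intros qc inner_grad_cont sq sm)
  note i1 = cont_int[OF c1] and i2 = cont_int[OF c2] and i3 = cont_int[OF c3]
  note i4 = ibp[OF sq perq sm pe]
  have all: "((\<lambda>x. 2 * ((q x)^2 / det (H x) / 2) - 2 * ((q x)^2 / 2) - 2 * ((grad q x \<bullet> grad \<phi> x) * q x)
        + 2 * ((grad q x \<bullet> grad \<phi> x) * q x + (q x)^2 * laplacian \<phi> x / 2)) has_integral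
      (2 * integral unit_cube (\<lambda>x. (q x)^2 / det (H x) / 2) - 2 * integral unit_cube (\<lambda>x. (q x)^2 / 2)
        - 2 * integral unit_cube (\<lambda>x. (grad q x \<bullet> grad \<phi> x) * q x) + 2 * 0)) unit_cube"
    by (intro has_integral_add has_integral_diff has_integral_mult_right i1 i2 i3 i4)
  have pw: "2 * ((q x)^2 / det (H x) / 2) - 2 * ((q x)^2 / 2) - 2 * ((grad q x \<bullet> grad \<phi> x) * q x)
        + 2 * ((grad q x \<bullet> grad \<phi> x) * q x + (q x)^2 * laplacian \<phi> x / 2)
      = (laplacian (PhiT \<phi>) x + 1 / det (H x) - 1 - real CARD('n)) * (q x)^2" for x
    unfolding lapP by (simp add: field_simps)
  have "integral unit_cube (\<lambda>x. (laplacian (PhiT \<phi>) x + 1 / det (H x) - 1 - real CARD('n)) * (q x)^2)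
      = 2 * integral unit_cube (\<lambda>x. (q x)^2 / det (H x) / 2) - 2 * integral unit_cube (\<lambda>x. (q x)^2 / 2)
        - 2 * integral unit_cube (\<lambda>x. (grad q x \<bullet> grad \<phi> x) * q x)"
    using integral_unique[OF all] unfolding pw by simp
  moreover have "transport_bregman_torus U_torus (\<lambda>r. r) p q (grad (PhiT \<phi>))
      = integral unit_cube (\<lambda>x. (q x)^2 / det (H x) / 2) - integral unit_cube (\<lambda>x. (q x)^2 / 2)
        - integral unit_cube (\<lambda>x. (grad q x \<bullet> grad \<phi> x) * q x)"
    unfolding transport_bregman_torus_def U1 g_def[symmetric] gx by (simp add: U_torus_def)
  ultimately show ?thesis unfolding H_def by simp
qed

lemma smooth_on_real_D:
  assumes "smooth_on_real S f"
  shows "\<forall>x\<in>S. f differentiable (at x within S)"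
    "smooth_on_real S (\<lambda>x. vector_derivative f (at x within S))"
  using assms by (auto elim: smooth_on_real.cases)

lemma smooth_on_real_cont:
  assumes "smooth_on_real S f" shows "continuous_on S f"
  using smooth_on_real_D(1)[OF assms]
  by (simp add: continuous_on_eq_continuous_within differentiable_imp_continuous_within)

lemma smooth_on_real_deriv_cont:
  assumes "smooth_on_real S f"
  shows "continuous_on S (\<lambda>x. vector_derivative f (at x within S))"
  using smooth_on_real_cont[OF smooth_on_real_D(2)[OF assms]] .

lemma smooth_interior_deriv:
  assumes "smooth_on_real {0..1} f" "x \<in> {0<..<1::real}"
  shows "(f has_real_derivative vector_derivative f (at x within {0..1})) (at x)"
proof -
  have "x \<in> {0..1}" using assms(2) by auto
  then have "f differentiable (at x within {0..1})" using smooth_on_real_D(1)[OF assms(1)] by auto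
  then have "(f has_vector_derivative vector_derivative f (at x within {0..1})) (at x within {0..1})"
    using vector_derivative_works by blast
  moreover have "at x within {0..1} = at x"
    using assms(2) by (intro at_within_interior) simp
  ultimately show ?thesis by (simp add: has_real_derivative_iff_has_vector_derivative)
qed

lemma vd_interior:
  assumes "(f has_real_derivative d) (at x)" "x \<in> {0<..<1::real}"
  shows "vector_derivative f (at x within {0..1}) = d"
proof -
  have "at x within {0..1} = at x"
    using assms(2) by (intro at_within_interior) simp
  then show ?thesis using assms(1)
    by (simp add: has_real_derivative_iff_has_vector_derivative vector_derivative_at)
qed

context
  fixes p :: "real \<Rightarrow> real"
  assumes dens: "interval_density p"
begin

lemma p_cont: "continuous_on {0..1} p"
  using dens smooth_on_real_cont unfolding interval_density_def by blast

lemma p_pos: "x \<in> {0..1} \<Longrightarrow> 0 < p x"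
  using dens unfolding interval_density_def by blast

lemma cdf_deriv_within: "x \<in> {0..1} \<Longrightarrow> (cdf p has_real_derivative p x) (at x within {0..1})"
  unfolding cdf_def[abs_def] using integral_has_real_derivative[OF p_cont] by blast

lemma cdf_deriv: "x \<in> {0<..<1} \<Longrightarrow> (cdf p has_real_derivative p x) (at x)"
proof -
  assume x: "x \<in> {0<..<1}"
  have "at x within {0..1} = at x"
    using x by (intro at_within_interior) simp
  with cdf_deriv_within[of x] x show ?thesis by auto
qed

lemma cdf_cont: "continuous_on {0..1} (cdf p)"
  using cdf_deriv_within
  by (meson DERIV_continuous continuous_on_eq_continuous_within)

lemma cdf_0: "cdf p 0 = 0" by (simp add: cdf_def)
lemma cdf_1: "cdf p 1 = 1" using dens by (simp add: cdf_def interval_density_def)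

lemma cdf_less: assumes "0 \<le> x" "x < y" "y \<le> 1" shows "cdf p x < cdf p y"
proof -
  have "continuous_on {x..y} (cdf p)" using cdf_cont by (rule continuous_on_subset) (use assms in auto)
  moreover have "\<And>z. x < z \<Longrightarrow> z < y \<Longrightarrow> cdf p differentiable (at z)"
    using cdf_deriv assms real_differentiable_def by (metis greaterThanLessThan_iff less_le_trans order_le_less_trans)
  ultimately obtain l z where z: "x < z" "z < y" "DERIV (cdf p) z :> l" "cdf p y - cdf p x = (y - x) * l"
    using MVT[OF assms(2)] by blast
  have "DERIV (cdf p) z :> p z" using cdf_deriv z assms by auto
  then have "l = p z" using z(3) DERIV_unique by blast
  moreover have "p z > 0" using p_pos z assms by auto
  ultimately have "(y - x) * l > 0" using z by simp
  then show ?thesis using z(4) by linarith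
qed

lemma cdf_inj: "inj_on (cdf p) {0..1}"
  by (rule inj_onI) (metis atLeastAtMost_iff cdf_less linorder_neq_iff)

lemma cdf_range: "x \<in> {0..1} \<Longrightarrow> cdf p x \<in> {0..1}"
  using cdf_less[of 0 x] cdf_less[of x 1] cdf_0 cdf_1
  by (cases "x = 0"; cases "x = 1") auto

lemma cdf_range_open: "x \<in> {0<..<1} \<Longrightarrow> cdf p x \<in> {0<..<1}"
  using cdf_less[of 0 x] cdf_less[of x 1] cdf_0 cdf_1 by auto

lemma cdf_image: "cdf p ` {0..1} = {0..1}"
proof
  show "cdf p ` {0..1} \<subseteq> {0..1}" using cdf_range by auto
  show "{0..1} \<subseteq> cdf p ` {0..1}"
  proof
    fix y :: real assume "y \<in> {0..1}"
    then obtain x where "0 \<le> x" "x \<le> 1" "cdf p x = y"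
      using IVT'[of "cdf p" 0 y 1] cdf_cont cdf_0 cdf_1 by auto
    then show "y \<in> cdf p ` {0..1}" by auto
  qed
qed

lemma inv_cdf_cdf: "x \<in> {0..1} \<Longrightarrow> inv_cdf p (cdf p x) = x"
  unfolding inv_cdf_def using cdf_inj by (simp add: inv_into_f_f)

lemma cdf_inv_cdf: "s \<in> {0..1} \<Longrightarrow> cdf p (inv_cdf p s) = s"
  unfolding inv_cdf_def using cdf_image by (simp add: f_inv_into_f)

lemma inv_cdf_range: "s \<in> {0..1} \<Longrightarrow> inv_cdf p s \<in> {0..1}"
  unfolding inv_cdf_def using cdf_image by (metis inv_into_into)

lemma inv_cdf_range_open: "s \<in> {0<..<1} \<Longrightarrow> inv_cdf p s \<in> {0<..<1}"
proof -
  assume s: "s \<in> {0<..<1}"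
  then have "inv_cdf p s \<in> {0..1}" using inv_cdf_range by auto
  moreover have "inv_cdf p s \<noteq> 0" "inv_cdf p s \<noteq> 1"
    using cdf_inv_cdf[of s] s cdf_0 cdf_1 by auto
  ultimately show ?thesis by auto
qed

lemma inv_cdf_cont: "continuous_on {0..1} (inv_cdf p)"
  using continuous_on_inv[OF cdf_cont compact_Icc] inv_cdf_cdf cdf_image by metis

lemma inv_cdf_deriv:
  assumes s: "s \<in> {0<..<1}"
  shows "(inv_cdf p has_real_derivative 1 / p (inv_cdf p s)) (at s)"
proof -
  have i: "inv_cdf p s \<in> {0<..<1}" using inv_cdf_range_open s by blast
  have "DERIV (cdf p) (inv_cdf p s) :> p (inv_cdf p s)" using cdf_deriv i by blast
  moreover have "p (inv_cdf p s) \<noteq> 0" using p_pos[of "inv_cdf p s"] i by auto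
  moreover have "isCont (inv_cdf p) s"
    using inv_cdf_cont s
    by (metis at_within_interior continuous_on_eq_continuous_within greaterThanLessThan_subseteq_atLeastAtMost_iff
        interior_atLeastAtMost_real order_refl subsetD)
  ultimately have "DERIV (inv_cdf p) s :> inverse (p (inv_cdf p s))"
    using DERIV_inverse_function[where f="cdf p" and g="inv_cdf p" and x=s and a=0 and b=1] s cdf_inv_cdf by auto
  then show ?thesis by (simp add: inverse_eq_divide)
qed

end

lemma subst01:
  fixes h \<phi> \<phi>' :: "real \<Rightarrow> real"
  assumes h: "continuous_on {0..1} h" and c: "continuous_on {0..1} \<phi>"
    and r: "\<phi> ` {0..1} \<subseteq> {0..1}" and e: "\<phi> 0 = 0" "\<phi> 1 = 1"
    and d: "\<And>x. x \<in> {0<..<1} \<Longrightarrow> \<phi> x \<in> {0<..<1} \<and> (\<phi> has_real_derivative \<phi>' x) (at x)"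
  shows "((\<lambda>x. h (\<phi> x) * \<phi>' x) has_integral integral {0..1} h) {0..1}"
proof -
  define H where "H y = integral {0..y} h" for y
  have Hw: "y \<in> {0..1} \<Longrightarrow> (H has_real_derivative h y) (at y within {0..1})" for y
    unfolding H_def[abs_def] using integral_has_real_derivative[OF h] by blast
  have Hc: "continuous_on {0..1} H"
    using Hw by (meson DERIV_continuous continuous_on_eq_continuous_within)
  have Ha: "y \<in> {0<..<1} \<Longrightarrow> (H has_real_derivative h y) (at y)" for y
  proof -
    assume y: "y \<in> {0<..<1}"
    have "at y within {0..1} = at y" using y by (intro at_within_interior) simp
    with Hw[of y] y show ?thesis by auto
  qed
  have Kc: "continuous_on {0..1} (H \<circ> \<phi>)"
    by (rule continuous_on_compose[OF c]) (rule continuous_on_subset[OF Hc r])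
  have Kd: "((H \<circ> \<phi>) has_vector_derivative h (\<phi> x) * \<phi>' x) (at x)" if x: "x \<in> {0<..<1}" for x
  proof -
    have "((\<lambda>x. H (\<phi> x)) has_real_derivative h (\<phi> x) * \<phi>' x) (at x)"
      using DERIV_chain2[OF Ha] d[OF x] by blast
    then show ?thesis by (simp add: has_real_derivative_iff_has_vector_derivative o_def)
  qed
  have "((\<lambda>x. h (\<phi> x) * \<phi>' x) has_integral ((H \<circ> \<phi>) 1 - (H \<circ> \<phi>) 0)) {0..1}"
    by (rule fundamental_theorem_of_calculus_interior[OF _ Kc Kd]) auto
  then show ?thesis using e by (simp add: H_def)
qed

lemma partB:
  fixes p q :: "real \<Rightarrow> real"
  assumes dp: "interval_density p" and dq: "interval_density q"
  shows "transport_bregman_int U_int (\<lambda>r. r) p q (inv_cdf p \<circ> cdf q)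
        = 1/2 * integral {0..1}
            (\<lambda>s. (1 / vector_derivative (inv_cdf p) (at s within {0..1})
                  - 1 / vector_derivative (inv_cdf q) (at s within {0..1}))^2
                 * vector_derivative (inv_cdf p) (at s within {0..1}))"
proof -
  define T where "T x = inv_cdf p (cdf q x)" for x
  define Dq where "Dq x = vector_derivative q (at x within {0..1})" for x
  define Td where "Td x = q x / p (T x)" for x
  have sq: "smooth_on_real {0..1} q" using dq unfolding interval_density_def by blast
  have qc: "continuous_on {0..1} q" using p_cont[OF dq] .
  have pc: "continuous_on {0..1} p" using p_cont[OF dp] .
  have Dqc: "continuous_on {0..1} Dq" unfolding Dq_def using smooth_on_real_deriv_cont[OF sq] .
  have qD: "x \<in> {0<..<1} \<Longrightarrow> (q has_real_derivative Dq x) (at x)" for x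
    unfolding Dq_def using smooth_interior_deriv[OF sq] by blast
  have Tr: "x \<in> {0..1} \<Longrightarrow> T x \<in> {0..1}" for x
    unfolding T_def using inv_cdf_range[OF dp] cdf_range[OF dq] by blast
  have Tro: "x \<in> {0<..<1} \<Longrightarrow> T x \<in> {0<..<1}" for x
    unfolding T_def using inv_cdf_range_open[OF dp] cdf_range_open[OF dq] by blast
  have Tc: "continuous_on {0..1} T"
    unfolding T_def[abs_def]
    by (rule continuous_on_compose2[OF inv_cdf_cont[OF dp] cdf_cont[OF dq]]) (use cdf_range[OF dq] in auto)
  have T0: "T 0 = 0" unfolding T_def using cdf_0[OF dq] cdf_0[OF dp] inv_cdf_cdf[OF dp, of 0] by simp
  have T1: "T 1 = 1" unfolding T_def using cdf_1[OF dq] cdf_1[OF dp] inv_cdf_cdf[OF dp, of 1] by simp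
  have TD: "x \<in> {0<..<1} \<Longrightarrow> (T has_real_derivative Td x) (at x)" for x
  proof -
    assume x: "x \<in> {0<..<1}"
    have "((\<lambda>x. inv_cdf p (cdf q x)) has_real_derivative 1 / p (inv_cdf p (cdf q x)) * q x) (at x)"
      by (rule DERIV_chain2[OF inv_cdf_deriv[OF dp] cdf_deriv[OF dq x]]) (use cdf_range_open[OF dq x] in auto)
    then show ?thesis unfolding T_def[abs_def] Td_def by simp
  qed
  have ppos: "x \<in> {0..1} \<Longrightarrow> 0 < p x" for x using p_pos[OF dp] by blast
  have qpos: "x \<in> {0..1} \<Longrightarrow> 0 < q x" for x using p_pos[OF dq] by blast
  have i1: "((\<lambda>x. (p (T x))^2/2 * Td x) has_integral U_int p) {0..1}"
    unfolding U_int_def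
    by (rule subst01[where h="\<lambda>y. (p y)^2/2"])
       (use Tc Tr T0 T1 Tro TD in \<open>auto intro!: continuous_intros pc\<close>)
  define J where "J x = (q x)^2 * (T x - x) / 2" for x
  define J' where "J' x = q x * Dq x * (T x - x) + (q x)^2 * (Td x - 1) / 2" for x
  have i2: "(J' has_integral 0) {0..1}"
  proof -
    have "(J' has_integral (J 1 - J 0)) {0..1}"
    proof (rule fundamental_theorem_of_calculus_interior)
      show "continuous_on {0..1} J" unfolding J_def[abs_def]
        by (intro continuous_intros qc Tc) auto
      fix x :: real assume x: "x \<in> {0<..<1}"
      have "(J has_real_derivative J' x) (at x)"
        unfolding J_def[abs_def] J'_def
        by (rule derivative_eq_intros qD[OF x] TD[OF x] | simp)+
      then show "(J has_vector_derivative J' x) (at x)"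
        by (simp add: has_real_derivative_iff_has_vector_derivative)
    qed simp
    then show ?thesis using T0 T1 by (simp add: J_def)
  qed
  define Rt where "Rt s = (p (inv_cdf p s) - q (inv_cdf q s))^2 / p (inv_cdf p s)" for s
  have Rtc: "continuous_on {0..1} Rt"
  proof -
    have c1: "continuous_on {0..1} (\<lambda>s. p (inv_cdf p s))"
      by (rule continuous_on_compose2[OF pc inv_cdf_cont[OF dp]]) (use inv_cdf_range[OF dp] in auto)
    have c2: "continuous_on {0..1} (\<lambda>s. q (inv_cdf q s))"
      by (rule continuous_on_compose2[OF qc inv_cdf_cont[OF dq]]) (use inv_cdf_range[OF dq] in auto)
    show ?thesis unfolding Rt_def[abs_def]
      by (intro continuous_intros c1 c2) (use ppos inv_cdf_range[OF dp] in fastforce)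
  qed
  have i3: "((\<lambda>x. Rt (cdf q x) * q x) has_integral integral {0..1} Rt) {0..1}"
    by (rule subst01[OF Rtc cdf_cont[OF dq]])
       (use cdf_range[OF dq] cdf_0[OF dq] cdf_1[OF dq] cdf_range_open[OF dq] cdf_deriv[OF dq] in auto)
  define R where "R s = (1 / vector_derivative (inv_cdf p) (at s within {0..1})
                  - 1 / vector_derivative (inv_cdf q) (at s within {0..1}))^2
                 * vector_derivative (inv_cdf p) (at s within {0..1})" for s
  have RR: "s \<in> {0..1} - {0,1} \<Longrightarrow> R s = Rt s" for s
  proof -
    assume s: "s \<in> {0..1} - {0,1}"
    then have so: "s \<in> {0<..<1}" by auto
    have v1: "vector_derivative (inv_cdf p) (at s within {0..1}) = 1 / p (inv_cdf p s)"
      by (rule vd_interior[OF inv_cdf_deriv[OF dp so] so])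
    have v2: "vector_derivative (inv_cdf q) (at s within {0..1}) = 1 / q (inv_cdf q s)"
      by (rule vd_interior[OF inv_cdf_deriv[OF dq so] so])
    show ?thesis unfolding R_def Rt_def v1 v2 by (simp add: divide_inverse)
  qed
  have i4: "integral {0..1} R = integral {0..1} Rt"
    by (rule integral_spike[of "{0,1}"]) (use RR in auto)
  have iq: "((\<lambda>x. (q x)^2/2) has_integral U_int q) {0..1}"
    unfolding U_int_def by (rule integrable_integral integrable_continuous_interval continuous_intros qc | simp)+
  have iD: "((\<lambda>x. Dq x * (T x - x) * q x) has_integral integral {0..1} (\<lambda>x. Dq x * (T x - x) * q x)) {0..1}"
    by (rule integrable_integral integrable_continuous_interval continuous_intros qc Tc Dqc)+
  have all: "((\<lambda>x. (p (T x))^2/2 * Td x - (q x)^2/2 - Dq x * (T x - x) * q x + J' x) has_integral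
      (U_int p - U_int q - integral {0..1} (\<lambda>x. Dq x * (T x - x) * q x) + 0)) {0..1}"
    by (intro has_integral_add has_integral_diff i1 iq iD i2)
  have pw: "x \<in> {0..1} \<Longrightarrow> (p (T x))^2/2 * Td x - (q x)^2/2 - Dq x * (T x - x) * q x + J' x
        = 1/2 * (Rt (cdf q x) * q x)" for x
  proof -
    assume x: "x \<in> {0..1}"
    have P: "p (T x) > 0" using ppos Tr x by blast
    have "inv_cdf q (cdf q x) = x" using inv_cdf_cdf[OF dq x] .
    then have Rq: "Rt (cdf q x) = (p (T x) - q x)^2 / p (T x)" unfolding Rt_def T_def by simp
    show ?thesis using P unfolding Td_def J'_def Rq
      by (simp add: field_simps power2_eq_square)
  qed
  have all2: "((\<lambda>x. 1/2 * (Rt (cdf q x) * q x)) has_integral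
      (U_int p - U_int q - integral {0..1} (\<lambda>x. Dq x * (T x - x) * q x))) {0..1}"
    using has_integral_eq[OF pw all] by simp
  have "((\<lambda>x. 1/2 * (Rt (cdf q x) * q x)) has_integral 1/2 * integral {0..1} Rt) {0..1}"
    using has_integral_mult_right[OF i3, of "1/2"] by simp
  then have eq: "U_int p - U_int q - integral {0..1} (\<lambda>x. Dq x * (T x - x) * q x) = 1/2 * integral {0..1} Rt"
    using all2 has_integral_unique by blast
  show ?thesis
    unfolding transport_bregman_int_def R_def[symmetric] i4
    using eq unfolding T_def Dq_def by (simp add: o_def)
qed

theorem mainTheorem7:
  shows
  "(\<forall>(p :: real^'n \<Rightarrow> real) q \<phi>.
      torus_density p \<and> torus_density q \<and> smooth_Rn \<phi> \<and> Zn_periodic \<phi>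
      \<and> (\<forall>x. \<forall>v. v \<noteq> 0 \<longrightarrow>
             0 < v \<bullet> (hess (\<lambda>y. norm y ^ 2 / 2 + \<phi> y) x *v v))
      \<and> (\<forall>x. p (grad (\<lambda>y. norm y ^ 2 / 2 + \<phi> y) x)
                * det (hess (\<lambda>y. norm y ^ 2 / 2 + \<phi> y) x) = q x)
      \<longrightarrow> transport_bregman_torus U_torus (\<lambda>r. r) p q (grad (\<lambda>y. norm y ^ 2 / 2 + \<phi> y))
          = 1/2 * integral unit_cube
              (\<lambda>x. (laplacian (\<lambda>y. norm y ^ 2 / 2 + \<phi> y) x
                    + 1 / det (hess (\<lambda>y. norm y ^ 2 / 2 + \<phi> y) x)
                    - 1 - real CARD('n)) * (q x)^2))
   \<and>
   (\<forall>p q :: real \<Rightarrow> real.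
      interval_density p \<and> interval_density q \<longrightarrow>
      transport_bregman_int U_int (\<lambda>r. r) p q (inv_cdf p \<circ> cdf q)
        = 1/2 * integral {0..1}
            (\<lambda>s. (1 / vector_derivative (inv_cdf p) (at s within {0..1})
                  - 1 / vector_derivative (inv_cdf q) (at s within {0..1}))^2
                 * vector_derivative (inv_cdf p) (at s within {0..1})))"
  proof
  show "\<forall>(p :: real^'n \<Rightarrow> real) q \<phi>.
      torus_density p \<and> torus_density q \<and> smooth_Rn \<phi> \<and> Zn_periodic \<phi>
      \<and> (\<forall>x. \<forall>v. v \<noteq> 0 \<longrightarrow>
             0 < v \<bullet> (hess (\<lambda>y. norm y ^ 2 / 2 + \<phi> y) x *v v))
      \<and> (\<forall>x. p (grad (\<lambda>y. norm y ^ 2 / 2 + \<phi> y) x)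
                * det (hess (\<lambda>y. norm y ^ 2 / 2 + \<phi> y) x) = q x)
      \<longrightarrow> transport_bregman_torus U_torus (\<lambda>r. r) p q (grad (\<lambda>y. norm y ^ 2 / 2 + \<phi> y))
          = 1/2 * integral unit_cube
              (\<lambda>x. (laplacian (\<lambda>y. norm y ^ 2 / 2 + \<phi> y) x
                    + 1 / det (hess (\<lambda>y. norm y ^ 2 / 2 + \<phi> y) x)
                    - 1 - real CARD('n)) * (q x)^2)"
  proof (intro allI impI)
    fix p q :: "real^'n \<Rightarrow> real" and \<phi> :: "real^'n \<Rightarrow> real"
    assume A: "torus_density p \<and> torus_density q \<and> smooth_Rn \<phi> \<and> Zn_periodic \<phi>
      \<and> (\<forall>x. \<forall>v. v \<noteq> 0 \<longrightarrow>
             0 < v \<bullet> (hess (\<lambda>y. norm y ^ 2 / 2 + \<phi> y) x *v v))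
      \<and> (\<forall>x. p (grad (\<lambda>y. norm y ^ 2 / 2 + \<phi> y) x)
                * det (hess (\<lambda>y. norm y ^ 2 / 2 + \<phi> y) x) = q x)"
    have sm: "smooth_Rn \<phi>" and pe: "Zn_periodic \<phi>" using A by simp_all
    have eP: "(\<lambda>y. norm y ^ 2 / 2 + \<phi> y) = PhiT \<phi>" by (simp add: PhiT_def[OF sm pe])
    show "transport_bregman_torus U_torus (\<lambda>r. r) p q (grad (\<lambda>y. norm y ^ 2 / 2 + \<phi> y))
          = 1/2 * integral unit_cube
              (\<lambda>x. (laplacian (\<lambda>y. norm y ^ 2 / 2 + \<phi> y) x
                    + 1 / det (hess (\<lambda>y. norm y ^ 2 / 2 + \<phi> y) x)
                    - 1 - real CARD('n)) * (q x)^2)"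
      unfolding eP using partA[of p q \<phi>] A unfolding eP by blast
  qed
next
  show "\<forall>p q :: real \<Rightarrow> real.
      interval_density p \<and> interval_density q \<longrightarrow>
      transport_bregman_int U_int (\<lambda>r. r) p q (inv_cdf p \<circ> cdf q)
        = 1/2 * integral {0..1}
            (\<lambda>s. (1 / vector_derivative (inv_cdf p) (at s within {0..1})
                  - 1 / vector_derivative (inv_cdf q) (at s within {0..1}))^2
                 * vector_derivative (inv_cdf p) (at s within {0..1}))"
    using partB by blast
qed

end
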